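(* Let $P$ be an isotropic Mueller transform field, and let $\mathrm P_{l_om_op_o,l_im_ip_i}$ be its PSH coefficients. Then: 1. $\mathrm P_{l_om_op_o,l_im_ip_i}=0$ whenever $|m_i|\ne|m_o|$. 2. For $l_i,l_o\ge2$, $\tilde{\mathrm P}_{l_om_o,l_im_i,\mathrm{iso}}=0$ whenever $m_i\ne m_o$. 3. For $l_i,l_o\ge2$, $\tilde{\mathrm P}_{l_om_o,l_im_i,\mathrm{conj}}=0$ whenever $m_i\ne -m_o$.
   Context: Fix a right-handed orthonormal global frame $F_g=[\hat x_g,\hat y_g,\hat z_g]$ of $\mathbb R^3$, spherical coordinates $\hat\omega(\theta,\phi)=\sin\theta\cos\phi\,\hat x_g+\sin\theta\sin\phi\,\hat y_g+\cos\theta\,\hat z_g$, and $d\hat\omega=\sin\theta\,d\theta\,d\phi$ on $S^2$. A local frame at $\hat\omega$ is a right-handed orthonormal frame $F$ with third axis $\hat\omega$; the others are $FR_z(\vartheta)$, i.e. $F$ rotated by $\vartheta$ about $\hat\omega$. The $\theta\phi$-frame field is $F_{\theta\phi}(\theta,\phi)=[\hat\theta,\hat\phi,\hat\omega]$ with $\hat\theta=\cos\theta\cos\phi\,\hat x_g+\cos\theta\sin\phi\,\hat y_g-\sin\theta\,\hat z_g$ and $\hat\phi=-\sin\phi\,\hat x_g+\cos\phi\,\hat y_g$. Stokes space. $\mathcal S_{\hat\omega}$ consists of classes $[\mathbf s]_F$ ($\mathbf s\in\mathbb R^4$) with $(\mathbf s,F)\sim(C(\vartheta)\mathbf s,FR_z(\vartheta))$,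 where $C(\vartheta)$ is the identity on coordinates 0, 3 and acts on coordinates $(1,2)$ by $\begin{pmatrix}\cos2\vartheta&\sin2\vartheta\\-\sin2\vartheta&\cos2\vartheta\end{pmatrix}$. The inner product is $\langle s,t\rangle=[s]^F\cdot[t]^F$, with $[s]^F$ the components. Rotations act by $R_{\mathcal S}[\mathbf s]_F=[\mathbf s]_{RF}$. Stokes vector fields $f$ ($f(\hat\omega)\in\mathcal S_{\hat\omega}$) have inner product $\langle f,g\rangle=\int_{S^2}\langle f(\hat\omega),g(\hat\omega)\rangle d\hat\omega$. Mueller transform fields. A Mueller transform $M:\mathcal S_{\hat\omega_i}\to\mathcal S_{\hat\omega_o}$ is a real linear map. Its Mueller matrix $[M]^{F_i\to F_o}\in\mathbb R^{4\times4}$ satisfies $[Ms]^{F_o}=[M]^{F_i\to F_o}[s]^{F_i}$. A Mueller transform field $P$ assigns to each $(\hat\omega_i,\hat\omega_o)$ a Mueller transform $P(\hat\omega_i,\hat\omega_o):\mathcal S_{\hat\omega_i}\to\mathcal S_{\hat\omega_o}$. It acts on Stokes vector fields by $P_{\mathcal F}[f](\hat\omega_o)=\int_{S^2}P(\hat\omega_i,\hat\omega_o)f(\hat\omega_i)d\hat\omega_i$. $P$ is called isotropic if $P(R\hat\omega_i,R\hat\omega_o)=R_{\mathcal S}P(\hat\omega_i,\hat\omega_o)R_{\mathcal S}^{-1}$ for every rotation $R$ about $\hat z_g$. Spherical harmonics. $Y_{lm}=\sqrt{\tfrac{2l+1}{4\pi}\tfrac{(l-m)!}{(l+m)!}}P_l^m(\cos\theta)e^{im\phi}$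 with Condon–Shortley associated Legendre functions. Real SH: $Y^R_{lm}=\sqrt2\,\mathrm{Re}\,Y_{lm}$ ($m>0$), $Y_{l0}$, $\sqrt2\,\mathrm{Im}\,Y_{l|m|}$ ($m<0$). Spin-2 SH ($l\ge2$): $${}_2Y_{lm}=\sqrt{\tfrac{(l-2)!}{(l+2)!}}[\alpha_{lm}Y_{lm}+\beta_{lm}Y_{l-1,m}],$$ with $\alpha_{lm}=\frac{2m^2-l(l+1)}{\sin^2\theta}-2m(l-1)\frac{\cot\theta}{\sin\theta}+l(l-1)\cot^2\theta$ and $\beta_{lm}=2\sqrt{\tfrac{2l+1}{2l-1}(l^2-m^2)}(\frac{m}{\sin^2\theta}+\frac{\cot\theta}{\sin\theta})$. PSH. $\vec Y_{lm0}=[(Y^R_{lm},0,0,0)^T]_{F_{\theta\phi}}$, $\vec Y_{lm1}=[(0,\mathrm{Re}\,{}_2Y_{lm},\mathrm{Im}\,{}_2Y_{lm},0)^T]_{F_{\theta\phi}}$, $\vec Y_{lm2}=[(0,-\mathrm{Im}\,{}_2Y_{lm},\mathrm{Re}\,{}_2Y_{lm},0)^T]_{F_{\theta\phi}}$, $\vec Y_{lm3}=[(0,0,0,Y^R_{lm})^T]_{F_{\theta\phi}}$. Indices: $|m|\le l$, and $l\ge 2$ when $p\in\{1,2\}$. Coefficients. The PSH coefficients of $P$ are $\mathrm P_{l_om_op_o,l_im_ip_i}=\langle\vec Y_{l_om_op_o},P_{\mathcal F}[\vec Y_{l_im_ip_i}]\rangle$. For a real $2\times2$ matrix $M=(m_{jk})$,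 set $$\mathbb C_{\mathrm{iso}}(M)=\tfrac{m_{11}+m_{22}}2+\tfrac{m_{21}-m_{12}}2 i,\qquad \mathbb C_{\mathrm{conj}}(M)=\tfrac{m_{11}-m_{22}}2+\tfrac{m_{21}+m_{12}}2 i.$$ Let $\tilde P_{\mathrm{iso}}(\hat\omega_i,\hat\omega_o)$ and $\tilde P_{\mathrm{conj}}(\hat\omega_i,\hat\omega_o)$ be $\mathbb C_{\mathrm{iso}}$ and $\mathbb C_{\mathrm{conj}}$ of the block with rows and columns $1,2$ (indices counted from 0) of $[P(\hat\omega_i,\hat\omega_o)]^{F_{\theta\phi}(\hat\omega_i)\to F_{\theta\phi}(\hat\omega_o)}$. Define $$\tilde{\mathrm P}_{l_om_o,l_im_i,\mathrm{iso}}=\iint\tilde P_{\mathrm{iso}}(\hat\omega_i,\hat\omega_o)\,\overline{{}_2Y_{l_om_o}(\hat\omega_o)}\,{}_2Y_{l_im_i}(\hat\omega_i)\,d\hat\omega_id\hat\omega_o,$$ $$\tilde{\mathrm P}_{l_om_o,l_im_i,\mathrm{conj}}=\iint\tilde P_{\mathrm{conj}}(\hat\omega_i,\hat\omega_o)\,\overline{{}_2Y_{l_om_o}(\hat\omega_o)}\,\overline{{}_2Y_{l_im_i}(\hat\omega_i)}\,d\hat\omega_id\hat\omega_o,$$ both integrals taken over $S^2\times S^2$. *)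

theory Defs
  imports "HOL-Analysis.Analysis" "HOL-Computational_Algebra.Polynomial"
begin

text \<open>Global frame: the standard basis of real^3; components x = \$1, y = \$2, z = \$3.\<close>

definition sph :: "real \<Rightarrow> real \<Rightarrow> real^3" where
  "sph \<theta> \<phi> = vector [sin \<theta> * cos \<phi>, sin \<theta> * sin \<phi>, cos \<theta>]"

text \<open>A frame is a triple of axis vectors (the columns of the frame matrix).\<close>
type_synonym frame = "(real^3) \<times> (real^3) \<times> (real^3)"

definition is_frame :: "frame \<Rightarrow> bool" where
  "is_frame F \<longleftrightarrow> (case F of (a, b, c) \<Rightarrow>
      norm a = 1 \<and> norm b = 1 \<and> norm c = 1 \<and> a \<bullet> b = 0 \<and> a \<bullet> c = 0 \<and> b \<bullet> c = 0
      \<and> cross3 a b = c)"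

definition local_frame :: "real^3 \<Rightarrow> frame \<Rightarrow> bool" where
  "local_frame \<omega> F \<longleftrightarrow> is_frame F \<and> snd (snd F) = \<omega>"

definition frot :: "frame \<Rightarrow> real \<Rightarrow> frame" where
  "frot F t = (case F of (a, b, c) \<Rightarrow>
      (cos t *\<^sub>R a + sin t *\<^sub>R b, (- sin t) *\<^sub>R a + cos t *\<^sub>R b, c))"

definition rotz :: "real \<Rightarrow> real^3 \<Rightarrow> real^3" where
  "rotz g v = vector [cos g * v$1 - sin g * v$2, sin g * v$1 + cos g * v$2, v$3]"

definition rotz_frame :: "real \<Rightarrow> frame \<Rightarrow> frame" where
  "rotz_frame g F = (case F of (a, b, c) \<Rightarrow> (rotz g a, rotz g b, rotz g c))"

definition Ftp :: "real \<Rightarrow> real \<Rightarrow> frame" where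
  "Ftp \<theta> \<phi> = (vector [cos \<theta> * cos \<phi>, cos \<theta> * sin \<phi>, - sin \<theta>],
                 vector [- sin \<phi>, cos \<phi>, 0],
                 sph \<theta> \<phi>)"

section \<open>Stokes components and Mueller matrices (indices 0..3 as in the paper)\<close>

definition stokes :: "real \<Rightarrow> real \<Rightarrow> real \<Rightarrow> real \<Rightarrow> real^4" where
  "stokes a b c d = (\<chi> i. if i = 0 then a else if i = 1 then b else if i = 2 then c else d)"

definition Cmat :: "real \<Rightarrow> real^4^4" where
  "Cmat t = (\<chi> i j.
      if (i = 0 \<and> j = 0) \<or> (i = 3 \<and> j = 3) then 1
      else if i = 1 \<and> j = 1 then cos (2 * t)
      else if i = 1 \<and> j = 2 then sin (2 * t)
      else if i = 2 \<and> j = 1 then - sin (2 * t)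
      else if i = 2 \<and> j = 2 then cos (2 * t)
      else 0)"

text \<open>
  A Mueller transform field P is represented by its Mueller matrices:
  P wi wo Fi Fo is the matrix of P(wi,wo) w.r.t. local frames Fi (at wi) and Fo (at wo).
  Such a family comes from a single real linear map
  S_wi to S_wo for every (wi,wo) iff it transforms correctly under change of local frames,
  since components in F R_z(t) are C(t) times components in F.\<close>
type_synonym mueller_field = "real^3 \<Rightarrow> real^3 \<Rightarrow> frame \<Rightarrow> frame \<Rightarrow> real^4^4"

definition is_mueller_field :: "mueller_field \<Rightarrow> bool" where
  "is_mueller_field P \<longleftrightarrow> (\<forall>wi wo Fi Fo a b. local_frame wi Fi \<and> local_frame wo Fo \<longrightarrow>
      P wi wo (frot Fi a) (frot Fo b) = Cmat b ** P wi wo Fi Fo ** Cmat (- a))"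

text \<open>Isotropy P(R wi, R wo) = R_S P(wi,wo) R_S^{-1} for all rotations R about z, written in
  matrices: the matrix of the right-hand side w.r.t. (R Fi, R Fo) is the matrix of P(wi,wo)
  w.r.t. (Fi, Fo).\<close>
definition isotropic :: "mueller_field \<Rightarrow> bool" where
  "isotropic P \<longleftrightarrow> (\<forall>g wi wo Fi Fo. local_frame wi Fi \<and> local_frame wo Fo \<longrightarrow>
      P (rotz g wi) (rotz g wo) (rotz_frame g Fi) (rotz_frame g Fo) = P wi wo Fi Fo)"

definition Ptp :: "mueller_field \<Rightarrow> real \<Rightarrow> real \<Rightarrow> real \<Rightarrow> real \<Rightarrow> real^4^4" where
  "Ptp P \<theta>i \<phi>i \<theta>o \<phi>o = P (sph \<theta>i \<phi>i) (sph \<theta>o \<phi>o) (Ftp \<theta>i \<phi>i) (Ftp \<theta>o \<phi>o)"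

definition S2dom :: "(real \<times> real) set" where
  "S2dom = {0..pi} \<times> {0..2*pi}"

definition sphere_int :: "(real \<Rightarrow> real \<Rightarrow> 'a::{banach, second_countable_topology}) \<Rightarrow> 'a" where
  "sphere_int f = set_lebesgue_integral lborel S2dom (\<lambda>x. sin (fst x) *\<^sub>R f (fst x) (snd x))"

definition sphere2_int ::
  "(real \<Rightarrow> real \<Rightarrow> real \<Rightarrow> real \<Rightarrow> 'a::{banach, second_countable_topology}) \<Rightarrow> 'a" where
  "sphere2_int f = set_lebesgue_integral lborel (S2dom \<times> S2dom)
     (\<lambda>x. (sin (fst (fst x)) * sin (fst (snd x))) *\<^sub>R
           f (fst (fst x)) (snd (fst x)) (fst (snd x)) (snd (snd x)))"

text \<open>Associated Legendre function with Condon-Shortley phase (Rodrigues form, valid for |m| \<le> l).\<close>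
definition alegendre :: "nat \<Rightarrow> int \<Rightarrow> real \<Rightarrow> real" where
  "alegendre l m x = (-1) ^ nat \<bar>m\<bar> / (2 ^ l * fact l) * (1 - x\<^sup>2) powr (of_int m / 2)
     * poly ((pderiv ^^ nat (int l + m)) ([:-1, 0, 1:] ^ l)) x"

definition ylm :: "nat \<Rightarrow> int \<Rightarrow> real \<Rightarrow> real \<Rightarrow> complex" where
  "ylm l m \<theta> \<phi> = complex_of_real
     (sqrt ((2 * real l + 1) / (4 * pi) * fact (nat (int l - m)) / fact (nat (int l + m)))
       * alegendre l m (cos \<theta>)) * cis (of_int m * \<phi>)"

definition yreal :: "nat \<Rightarrow> int \<Rightarrow> real \<Rightarrow> real \<Rightarrow> real" where
  "yreal l m \<theta> \<phi> = (if m > 0 then sqrt 2 * Re (ylm l m \<theta> \<phi>)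
                     else if m = 0 then Re (ylm l 0 \<theta> \<phi>)
                     else sqrt 2 * Im (ylm l \<bar>m\<bar> \<theta> \<phi>))"

definition alpha_s2 :: "nat \<Rightarrow> int \<Rightarrow> real \<Rightarrow> real" where
  "alpha_s2 l m \<theta> = (2 * (of_int m)\<^sup>2 - real l * (real l + 1)) / (sin \<theta>)\<^sup>2
     - 2 * of_int m * (real l - 1) * cot \<theta> / sin \<theta> + real l * (real l - 1) * (cot \<theta>)\<^sup>2"

definition beta_s2 :: "nat \<Rightarrow> int \<Rightarrow> real \<Rightarrow> real" where
  "beta_s2 l m \<theta> = 2 * sqrt ((2 * real l + 1) / (2 * real l - 1) * ((real l)\<^sup>2 - (of_int m)\<^sup>2))
     * (of_int m / (sin \<theta>)\<^sup>2 + cot \<theta> / sin \<theta>)"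

text \<open>Spin-2 spherical harmonics (l \<ge> 2).\<close>
definition y2lm :: "nat \<Rightarrow> int \<Rightarrow> real \<Rightarrow> real \<Rightarrow> complex" where
  "y2lm l m \<theta> \<phi> = complex_of_real (sqrt (fact (l - 2) / fact (l + 2)))
     * (complex_of_real (alpha_s2 l m \<theta>) * ylm l m \<theta> \<phi>
        + complex_of_real (beta_s2 l m \<theta>) * ylm (l - 1) m \<theta> \<phi>)"

text \<open>Polarized spherical harmonics: components in the theta-phi frame.\<close>
definition psh :: "nat \<Rightarrow> int \<Rightarrow> nat \<Rightarrow> real \<Rightarrow> real \<Rightarrow> real^4" where
  "psh l m p \<theta> \<phi> =
     (if p = 0 then stokes (yreal l m \<theta> \<phi>) 0 0 0
      else if p = 1 then stokes 0 (Re (y2lm l m \<theta> \<phi>)) (Im (y2lm l m \<theta> \<phi>)) 0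
      else if p = 2 then stokes 0 (- Im (y2lm l m \<theta> \<phi>)) (Re (y2lm l m \<theta> \<phi>)) 0
      else stokes 0 0 0 (yreal l m \<theta> \<phi>))"

definition psh_index :: "nat \<Rightarrow> int \<Rightarrow> nat \<Rightarrow> bool" where
  "psh_index l m p \<longleftrightarrow> p \<le> 3 \<and> \<bar>m\<bar> \<le> int l \<and> (p \<in> {1, 2} \<longrightarrow> l \<ge> 2)"

text \<open>PSH coefficient <Y_o, P_F[Y_i]>, with P_F[f](wo) computed in the theta-phi frame at wo.\<close>
definition psh_coeff :: "mueller_field \<Rightarrow> nat \<Rightarrow> int \<Rightarrow> nat \<Rightarrow> nat \<Rightarrow> int \<Rightarrow> nat \<Rightarrow> real" where
  "psh_coeff P lo mo po li mi pin = sphere_int (\<lambda>\<theta>o \<phi>o.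
      psh lo mo po \<theta>o \<phi>o \<bullet> sphere_int (\<lambda>\<theta>i \<phi>i. Ptp P \<theta>i \<phi>i \<theta>o \<phi>o *v psh li mi pin \<theta>i \<phi>i))"

definition C_iso :: "real^4^4 \<Rightarrow> complex" where
  "C_iso M = Complex ((M$1$1 + M$2$2) / 2) ((M$2$1 - M$1$2) / 2)"

definition C_conj :: "real^4^4 \<Rightarrow> complex" where
  "C_conj M = Complex ((M$1$1 - M$2$2) / 2) ((M$2$1 + M$1$2) / 2)"

definition tilde_iso :: "mueller_field \<Rightarrow> nat \<Rightarrow> int \<Rightarrow> nat \<Rightarrow> int \<Rightarrow> complex" where
  "tilde_iso P lo mo li mi = sphere2_int (\<lambda>\<theta>i \<phi>i \<theta>o \<phi>o.
      C_iso (Ptp P \<theta>i \<phi>i \<theta>o \<phi>o) * cnj (y2lm lo mo \<theta>o \<phi>o) * y2lm li mi \<theta>i \<phi>i)"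

definition tilde_conj :: "mueller_field \<Rightarrow> nat \<Rightarrow> int \<Rightarrow> nat \<Rightarrow> int \<Rightarrow> complex" where
  "tilde_conj P lo mo li mi = sphere2_int (\<lambda>\<theta>i \<phi>i \<theta>o \<phi>o.
      C_conj (Ptp P \<theta>i \<phi>i \<theta>o \<phi>o) * cnj (y2lm lo mo \<theta>o \<phi>o) * cnj (y2lm li mi \<theta>i \<phi>i))"

definition integrable_field :: "mueller_field \<Rightarrow> bool" where
  "integrable_field P \<longleftrightarrow> (\<forall>j k. set_integrable lborel (S2dom \<times> S2dom)
      (\<lambda>x. sin (fst (fst x)) * sin (fst (snd x)) *
            Ptp P (fst (fst x)) (snd (fst x)) (fst (snd x)) (snd (snd x)) $ j $ k))"

end

theory Submission
  imports Defs
begin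

lemma vec3_eq: "(x::real^3) = y \<longleftrightarrow> x$1 = y$1 \<and> x$2 = y$2 \<and> x$3 = y$3"
  by (auto simp: vec_eq_iff forall_3)

lemma rotz_sph: "rotz g (sph t p) = sph t (p + g)"
  by (simp add: rotz_def sph_def vec3_eq cos_add sin_add algebra_simps)

lemma rotz_frame_Ftp: "rotz_frame g (Ftp t p) = Ftp t (p + g)"
  by (simp add: rotz_frame_def rotz_def Ftp_def sph_def vec3_eq cos_add sin_add algebra_simps)

lemma local_frame_Ftp: "local_frame (sph t p) (Ftp t p)"
proof -
  have n: "norm (x::real^3) = 1 \<longleftrightarrow> x$1^2 + x$2^2 + x$3^2 = 1" for x
    by (simp add: norm_eq_sqrt_inner inner_vec_def sum_3 power2_eq_square)
  have i: "(x::real^3) \<bullet> y = x$1*y$1 + x$2*y$2 + x$3*y$3" for x y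
    by (simp add: inner_vec_def sum_3)
  have e: "cos p * (cos p * X) + sin p * (sin p * X) = X" for X
  proof -
    have "cos p * (cos p * X) + sin p * (sin p * X) = (sin p ^2 + cos p ^2) * X"
      by algebra
    then show ?thesis by simp
  qed
  show ?thesis
    unfolding local_frame_def is_frame_def Ftp_def sph_def
    apply (simp add: n i vec3_eq cross3_simps)
    apply (intro conjI)
    apply (simp_all add: power_mult_distrib algebra_simps cos_squared_eq)
    using e[of "cos t * sin t"] e[of "cos t"] by (simp_all add: algebra_simps)
qed

lemma lborel_translate:
  fixes f :: "'a::euclidean_space \<Rightarrow> 'b::{banach,second_countable_topology}"
  shows "integrable lborel (\<lambda>x. f (x + c)) \<longleftrightarrow> integrable lborel f"
    and "integral\<^sup>L lborel (\<lambda>x. f (x + c)) = integral\<^sup>L lborel f"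
proof -
  have "(integrable lborel (\<lambda>x. f (x + c)) \<longleftrightarrow> integrable lborel f)
      \<and> integral\<^sup>L lborel (\<lambda>x. f (x + c)) = integral\<^sup>L lborel f"
  proof (cases "f \<in> borel_measurable borel")
    case True
    have m: "(+) c \<in> measurable lborel borel" by simp
    have "integrable lborel f \<longleftrightarrow> integrable (distr lborel borel ((+) c)) f"
      by (simp add: lborel_distr_plus)
    also have "\<dots> \<longleftrightarrow> integrable lborel (\<lambda>x. f (c + x))"
      by (rule integrable_distr_eq[OF m True])
    finally have i: "integrable lborel f \<longleftrightarrow> integrable lborel (\<lambda>x. f (x + c))"
      by (simp add: add.commute)
    have "integral\<^sup>L lborel f = integral\<^sup>L (distr lborel borel ((+) c)) f"
      by (simp add: lborel_distr_plus)
    also have "\<dots> = integral\<^sup>L lborel (\<lambda>x. f (c + x))"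
      by (rule integral_distr[OF m True])
    finally show ?thesis using i by (simp add: add.commute)
  next
    case False
    have "\<not> (\<lambda>x. f (x + c)) \<in> borel_measurable borel"
    proof
      assume h: "(\<lambda>x. f (x + c)) \<in> borel_measurable borel"
      have "(\<lambda>y. (\<lambda>x. f (x + c)) (y - c)) \<in> borel_measurable borel"
        by (rule measurable_compose[OF _ h]) simp
      then show False using False by simp
    qed
    then have "\<not> integrable lborel (\<lambda>x. f (x + c))" "\<not> integrable lborel f"
      using False borel_measurable_integrable[of lborel "\<lambda>x. f (x + c)"]
        borel_measurable_integrable[of lborel f] by auto
    then show ?thesis by (simp add: not_integrable_integral_eq)
  qed
  then show "integrable lborel (\<lambda>x. f (x + c)) \<longleftrightarrow> integrable lborel f"
    and "integral\<^sup>L lborel (\<lambda>x. f (x + c)) = integral\<^sup>L lborel f" by auto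
qed

lemma shift_periodic_L:
  fixes F :: "'a::euclidean_space \<Rightarrow> 'b::{banach,second_countable_topology}"
  assumes per: "\<And>x. F (x + p) = F x"
    and sA: "A \<in> sets borel" and sB: "Bq \<in> sets borel"
    and AD: "A \<subseteq> D" and BD: "Bq \<subseteq> D"
    and Dc: "\<And>y. (y - c \<in> D) \<longleftrightarrow> (y \<in> A \<or> y - p \<in> Bq)"
    and AB: "\<And>y. y \<in> A \<Longrightarrow> y - p \<notin> Bq"
    and AE: "AE y in lborel. indicator D y = (indicator A y + indicator Bq y :: real)"
    and int: "integrable lborel (\<lambda>x. indicator D x *\<^sub>R F x)"
  shows "integrable lborel (\<lambda>x. indicator D x *\<^sub>R F (x + c))"
    and "integral\<^sup>L lborel (\<lambda>x. indicator D x *\<^sub>R F (x + c)) = integral\<^sup>L lborel (\<lambda>x. indicator D x *\<^sub>R F x)"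
proof -
  define h where "h y = indicator D (y - c) *\<^sub>R F y" for y
  have e1: "(\<lambda>x. indicator D x *\<^sub>R F (x + c)) = (\<lambda>x. h (x + c))"
    by (simp add: h_def)
  define hA where "hA y = indicator A y *\<^sub>R F y" for y
  define k where "k y = indicator Bq y *\<^sub>R F y" for y
  have hsplit: "h y = hA y + k (y + (- p))" for y
  proof -
    have "k (y + (- p)) = indicator Bq (y - p) *\<^sub>R F y"
      using per[of "y - p"] by (simp add: k_def)
    then show ?thesis
      unfolding h_def hA_def using Dc[of y] AB[of y]
      by (auto simp: indicator_def)
  qed
  have hA_eq: "hA = (\<lambda>y. indicator A y *\<^sub>R (indicator D y *\<^sub>R F y))"
    using AD by (auto simp: hA_def indicator_def fun_eq_iff)
  have k_eq: "k = (\<lambda>y. indicator Bq y *\<^sub>R (indicator D y *\<^sub>R F y))"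
    using BD by (auto simp: k_def indicator_def fun_eq_iff)
  have iA: "integrable lborel hA"
    unfolding hA_eq by (rule integrable_mult_indicator) (use sA int in auto)
  have iK: "integrable lborel k"
    unfolding k_eq by (rule integrable_mult_indicator) (use sB int in auto)
  have iK': "integrable lborel (\<lambda>y. k (y + (- p)))"
    using iK lborel_translate(1) by blast
  have ih: "integrable lborel h"
    unfolding hsplit[abs_def] using iA iK' by auto
  have "integral\<^sup>L lborel h = integral\<^sup>L lborel hA + integral\<^sup>L lborel (\<lambda>y. k (y + (- p)))"
    unfolding hsplit[abs_def] using iA iK' by (simp add: integral_add)
  also have "\<dots> = integral\<^sup>L lborel hA + integral\<^sup>L lborel k"
    using lborel_translate(2) by metis
  also have "\<dots> = integral\<^sup>L lborel (\<lambda>y. hA y + k y)"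
    using iA iK by simp
  also have "\<dots> = integral\<^sup>L lborel (\<lambda>x. indicator D x *\<^sub>R F x)"
  proof (rule integral_cong_AE)
    show "(\<lambda>y. hA y + k y) \<in> borel_measurable lborel" using iA iK by auto
    show "(\<lambda>x. indicator D x *\<^sub>R F x) \<in> borel_measurable lborel" using int by auto
    show "AE x in lborel. hA x + k x = indicator D x *\<^sub>R F x"
      using AE by eventually_elim (simp add: hA_def k_def scaleR_add_left[symmetric])
  qed
  finally have "integral\<^sup>L lborel h = integral\<^sup>L lborel (\<lambda>x. indicator D x *\<^sub>R F x)" .
  then show "integral\<^sup>L lborel (\<lambda>x. indicator D x *\<^sub>R F (x + c)) = integral\<^sup>L lborel (\<lambda>x. indicator D x *\<^sub>R F x)"
    unfolding e1 using lborel_translate(2) by metis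
  show "integrable lborel (\<lambda>x. indicator D x *\<^sub>R F (x + c))"
    unfolding e1 using ih lborel_translate(1) by blast
qed

type_synonym pt4 = "(real \<times> real) \<times> (real \<times> real)"

lemma null_hyper_i: "{x::pt4. snd (fst x) = a} \<in> null_sets lborel"
proof -
  have k: "((0,1),(0,0)) \<in> (Basis :: pt4 set)" by (simp add: Basis_prod_def zero_prod_def)
  have e: "{x::pt4. snd (fst x) = a} = {x. x \<bullet> ((0,1),(0,0)) = a}"
    by (auto simp: inner_prod_def)
  have "negligible {x::pt4. x \<bullet> ((0,1),(0,0)) = a}"
    by (rule negligible_standard_hyperplane[OF k])
  then have "{x::pt4. x \<bullet> ((0,1),(0,0)) = a} \<in> null_sets lebesgue"
    by (simp add: negligible_iff_null_sets)
  moreover have "{x::pt4. x \<bullet> ((0,1),(0,0)) = a} \<in> sets lborel"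
    by simp
  ultimately show ?thesis unfolding e by (simp add: null_sets_completion_iff)
qed

lemma null_hyper_o: "{x::pt4. snd (snd x) = a} \<in> null_sets lborel"
proof -
  have k: "((0,0),(0,1)) \<in> (Basis :: pt4 set)" by (simp add: Basis_prod_def zero_prod_def)
  have e: "{x::pt4. snd (snd x) = a} = {x. x \<bullet> ((0,0),(0,1)) = a}"
    by (auto simp: inner_prod_def)
  have "negligible {x::pt4. x \<bullet> ((0,0),(0,1)) = a}"
    by (rule negligible_standard_hyperplane[OF k])
  then have "{x::pt4. x \<bullet> ((0,0),(0,1)) = a} \<in> null_sets lebesgue"
    by (simp add: negligible_iff_null_sets)
  moreover have "{x::pt4. x \<bullet> ((0,0),(0,1)) = a} \<in> sets lborel"
    by simp
  ultimately show ?thesis unfolding e by (simp add: null_sets_completion_iff)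
qed

lemma borel_Times:
  fixes X :: "'a::second_countable_topology set" and Y :: "'b::second_countable_topology set"
  assumes "X \<in> sets borel" "Y \<in> sets borel"
  shows "X \<times> Y \<in> sets borel"
proof -
  have "X \<times> Y \<in> sets (borel \<Otimes>\<^sub>M borel)" using assms by (rule pair_measureI)
  then show ?thesis by (metis borel_prod)
qed

definition D4 :: "pt4 set" where "D4 = S2dom \<times> S2dom"

lemma shift_i:
  fixes F :: "pt4 \<Rightarrow> 'b::{banach,second_countable_topology}"
  assumes per: "\<And>a b c d. F ((a, b + 2*pi), (c, d)) = F ((a, b), (c, d))"
    and g: "0 \<le> g" "g \<le> 2*pi"
    and int: "integrable lborel (\<lambda>x. indicator D4 x *\<^sub>R F x)"
  shows "integrable lborel (\<lambda>x. indicator D4 x *\<^sub>R F ((fst (fst x), snd (fst x) + g), snd x))"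
    and "integral\<^sup>L lborel (\<lambda>x. indicator D4 x *\<^sub>R F ((fst (fst x), snd (fst x) + g), snd x))
         = integral\<^sup>L lborel (\<lambda>x. indicator D4 x *\<^sub>R F x)"
proof -
  define A :: "pt4 set" where "A = ({0..pi} \<times> {g..2*pi}) \<times> S2dom"
  define B0 :: "pt4 set" where "B0 = ({0..pi} \<times> {0<..g}) \<times> S2dom"
  define c :: pt4 where "c = ((0,g),(0,0))"
  define p :: pt4 where "p = ((0,2*pi),(0,0))"
  have eq: "F ((fst (fst x), snd (fst x) + g), snd x) = F (x + c)" for x
    by (cases x) (auto simp: c_def)
  have per': "F (x + p) = F x" for x
  proof -
    obtain a b c d where "x = ((a,b),(c,d))" by (metis prod.collapse)
    then show ?thesis using per[of a b c d] by (simp add: p_def)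
  qed
  have sA: "A \<in> sets borel" unfolding A_def S2dom_def by (intro borel_Times) auto
  have sB: "B0 \<in> sets borel" unfolding B0_def S2dom_def by (intro borel_Times) auto
  have AD: "A \<subseteq> D4" unfolding A_def D4_def S2dom_def using g by auto
  have BD: "B0 \<subseteq> D4" unfolding B0_def D4_def S2dom_def using g by auto
  have Dc: "(y - c \<in> D4) \<longleftrightarrow> (y \<in> A \<or> y - p \<in> B0)" for y
    unfolding A_def B0_def D4_def S2dom_def c_def p_def using g
    by (cases y) auto
  have AB: "y \<in> A \<Longrightarrow> y - p \<notin> B0" for y
    unfolding A_def B0_def p_def using g by (cases y) auto
  have AE: "AE y in lborel. indicator D4 y = (indicator A y + indicator B0 y :: real)"
  proof (rule AE_I')
    show "{x::pt4. snd (fst x) = 0} \<union> {x. snd (fst x) = g} \<in> null_sets lborel"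
      using null_hyper_i by auto
    show "{x \<in> space lborel. \<not> indicator D4 x = (indicator A x + indicator B0 x :: real)}
        \<subseteq> {x::pt4. snd (fst x) = 0} \<union> {x. snd (fst x) = g}"
      unfolding A_def B0_def D4_def S2dom_def using g
      by (auto simp: indicator_def split: if_splits)
  qed
  note L = shift_periodic_L[where F=F and p=p and A=A and Bq=B0 and D=D4 and c=c, OF per' sA sB AD BD Dc AB AE int]
  show "integrable lborel (\<lambda>x. indicator D4 x *\<^sub>R F ((fst (fst x), snd (fst x) + g), snd x))"
    using L(1) by (simp add: eq)
  show "integral\<^sup>L lborel (\<lambda>x. indicator D4 x *\<^sub>R F ((fst (fst x), snd (fst x) + g), snd x))
         = integral\<^sup>L lborel (\<lambda>x. indicator D4 x *\<^sub>R F x)"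
    using L(2) by (simp add: eq)
qed

lemma shift_o:
  fixes F :: "pt4 \<Rightarrow> 'b::{banach,second_countable_topology}"
  assumes per: "\<And>a b c d. F ((a, b), (c, d + 2*pi)) = F ((a, b), (c, d))"
    and g: "0 \<le> g" "g \<le> 2*pi"
    and int: "integrable lborel (\<lambda>x. indicator D4 x *\<^sub>R F x)"
  shows "integrable lborel (\<lambda>x. indicator D4 x *\<^sub>R F (fst x, (fst (snd x), snd (snd x) + g)))"
    and "integral\<^sup>L lborel (\<lambda>x. indicator D4 x *\<^sub>R F (fst x, (fst (snd x), snd (snd x) + g)))
         = integral\<^sup>L lborel (\<lambda>x. indicator D4 x *\<^sub>R F x)"
proof -
  define A :: "pt4 set" where "A = S2dom \<times> ({0..pi} \<times> {g..2*pi})"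
  define B0 :: "pt4 set" where "B0 = S2dom \<times> ({0..pi} \<times> {0<..g})"
  define c :: pt4 where "c = ((0,0),(0,g))"
  define p :: pt4 where "p = ((0,0),(0,2*pi))"
  have eq: "F (fst x, (fst (snd x), snd (snd x) + g)) = F (x + c)" for x
    by (cases x) (auto simp: c_def)
  have per': "F (x + p) = F x" for x
  proof -
    obtain a b c d where "x = ((a,b),(c,d))" by (metis prod.collapse)
    then show ?thesis using per[of a b c d] by (simp add: p_def)
  qed
  have sA: "A \<in> sets borel" unfolding A_def S2dom_def by (intro borel_Times) auto
  have sB: "B0 \<in> sets borel" unfolding B0_def S2dom_def by (intro borel_Times) auto
  have AD: "A \<subseteq> D4" unfolding A_def D4_def S2dom_def using g by auto
  have BD: "B0 \<subseteq> D4" unfolding B0_def D4_def S2dom_def using g by auto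
  have Dc: "(y - c \<in> D4) \<longleftrightarrow> (y \<in> A \<or> y - p \<in> B0)" for y
    unfolding A_def B0_def D4_def S2dom_def c_def p_def using g
    by (cases y) auto
  have AB: "y \<in> A \<Longrightarrow> y - p \<notin> B0" for y
    unfolding A_def B0_def p_def using g by (cases y) auto
  have AE: "AE y in lborel. indicator D4 y = (indicator A y + indicator B0 y :: real)"
  proof (rule AE_I')
    show "{x::pt4. snd (snd x) = 0} \<union> {x. snd (snd x) = g} \<in> null_sets lborel"
      using null_hyper_o by auto
    show "{x \<in> space lborel. \<not> indicator D4 x = (indicator A x + indicator B0 x :: real)}
        \<subseteq> {x::pt4. snd (snd x) = 0} \<union> {x. snd (snd x) = g}"
      unfolding A_def B0_def D4_def S2dom_def using g
      by (auto simp: indicator_def split: if_splits)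
  qed
  note L = shift_periodic_L[where F=F and p=p and A=A and Bq=B0 and D=D4 and c=c, OF per' sA sB AD BD Dc AB AE int]
  show "integrable lborel (\<lambda>x. indicator D4 x *\<^sub>R F (fst x, (fst (snd x), snd (snd x) + g)))"
    using L(1) by (simp add: eq)
  show "integral\<^sup>L lborel (\<lambda>x. indicator D4 x *\<^sub>R F (fst x, (fst (snd x), snd (snd x) + g)))
         = integral\<^sup>L lborel (\<lambda>x. indicator D4 x *\<^sub>R F x)"
    using L(2) by (simp add: eq)
qed


lemma shift_both_int:
  fixes F :: "pt4 \<Rightarrow> 'b::{banach,second_countable_topology}"
  assumes peri: "\<And>a b c d. F ((a, b + 2*pi), (c, d)) = F ((a, b), (c, d))"
    and pero: "\<And>a b c d. F ((a, b), (c, d + 2*pi)) = F ((a, b), (c, d))"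
    and g: "0 \<le> g" "g \<le> 2*pi"
    and int: "integrable lborel (\<lambda>x. indicator D4 x *\<^sub>R F x)"
  shows "integrable lborel (\<lambda>x. indicator D4 x *\<^sub>R F ((fst (fst x), snd (fst x) + g), (fst (snd x), snd (snd x) + g)))"
    and "integral\<^sup>L lborel (\<lambda>x. indicator D4 x *\<^sub>R F ((fst (fst x), snd (fst x) + g), (fst (snd x), snd (snd x) + g)))
         = integral\<^sup>L lborel (\<lambda>x. indicator D4 x *\<^sub>R F x)"
proof -
  define F1 where "F1 x = F ((fst (fst x), snd (fst x) + g), snd x)" for x
  note I = shift_i[OF peri g int]
  have I1: "integrable lborel (\<lambda>x. indicator D4 x *\<^sub>R F1 x)" using I(1) by (simp add: F1_def)
  have pero1: "F1 ((a, b), (c, d + 2*pi)) = F1 ((a, b), (c, d))" for a b c d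
    using pero by (simp add: F1_def)
  note O = shift_o[OF pero1 g I1]
  show "integrable lborel (\<lambda>x. indicator D4 x *\<^sub>R F ((fst (fst x), snd (fst x) + g), (fst (snd x), snd (snd x) + g)))"
    using O(1) by (simp add: F1_def)
  show "integral\<^sup>L lborel (\<lambda>x. indicator D4 x *\<^sub>R F ((fst (fst x), snd (fst x) + g), (fst (snd x), snd (snd x) + g)))
         = integral\<^sup>L lborel (\<lambda>x. indicator D4 x *\<^sub>R F x)"
    using O(2) I(2) by (simp add: F1_def)
qed

lemma shift_both:
  fixes F :: "pt4 \<Rightarrow> 'b::{banach,second_countable_topology}"
  assumes peri: "\<And>a b c d. F ((a, b + 2*pi), (c, d)) = F ((a, b), (c, d))"
    and pero: "\<And>a b c d. F ((a, b), (c, d + 2*pi)) = F ((a, b), (c, d))"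
    and g: "0 \<le> g" "g \<le> 2*pi"
  shows "integral\<^sup>L lborel (\<lambda>x. indicator D4 x *\<^sub>R F ((fst (fst x), snd (fst x) + g), (fst (snd x), snd (snd x) + g)))
         = integral\<^sup>L lborel (\<lambda>x. indicator D4 x *\<^sub>R F x)"
proof (cases "integrable lborel (\<lambda>x. indicator D4 x *\<^sub>R F x)")
  case True
  then show ?thesis using shift_both_int(2)[OF peri pero g] by blast
next
  case False
  define G where "G x = F ((fst (fst x), snd (fst x) + g), (fst (snd x), snd (snd x) + g))" for x
  have G_peri: "G ((a, b + 2*pi), (c, d)) = G ((a, b), (c, d))" for a b c d
    using peri[of a "b + g" "c" "d + g"] by (simp add: G_def algebra_simps)
  have G_pero: "G ((a, b), (c, d + 2*pi)) = G ((a, b), (c, d))" for a b c d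
    using pero[of a "b + g" "c" "d + g"] by (simp add: G_def algebra_simps)
  have g': "0 \<le> 2*pi - g" "2*pi - g \<le> 2*pi" using g by auto
  have "\<not> integrable lborel (\<lambda>x. indicator D4 x *\<^sub>R G x)"
  proof
    assume iG: "integrable lborel (\<lambda>x. indicator D4 x *\<^sub>R G x)"
    have "integrable lborel (\<lambda>x. indicator D4 x *\<^sub>R G ((fst (fst x), snd (fst x) + (2*pi - g)), (fst (snd x), snd (snd x) + (2*pi - g))))"
      by (rule shift_both_int(1)[OF G_peri G_pero g' iG])
    moreover have "G ((fst (fst x), snd (fst x) + (2*pi - g)), (fst (snd x), snd (snd x) + (2*pi - g))) = F x" for x
    proof -
      obtain a b c d where x: "x = ((a,b),(c,d))" by (metis prod.collapse)
      have "G ((fst (fst x), snd (fst x) + (2*pi - g)), (fst (snd x), snd (snd x) + (2*pi - g)))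
          = F ((a, b + 2*pi), (c, d + 2*pi))" by (simp add: G_def x algebra_simps)
      also have "\<dots> = F x" using peri pero by (simp add: x)
      finally show ?thesis .
    qed
    ultimately show False using False by simp
  qed
  then show ?thesis using False unfolding G_def by (simp add: not_integrable_integral_eq)
qed

lemma sphere2_int_shift:
  fixes f :: "real \<Rightarrow> real \<Rightarrow> real \<Rightarrow> real \<Rightarrow> 'b::{banach,second_countable_topology}"
  assumes peri: "\<And>a b c d. f a (b + 2*pi) c d = f a b c d"
    and pero: "\<And>a b c d. f a b c (d + 2*pi) = f a b c d"
    and g: "0 \<le> g" "g \<le> 2*pi"
  shows "sphere2_int (\<lambda>a b c d. f a (b + g) c (d + g)) = sphere2_int f"
proof -
  define F where "F x = (sin (fst (fst x)) * sin (fst (snd x))) *\<^sub>R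
           f (fst (fst x)) (snd (fst x)) (fst (snd x)) (snd (snd x))" for x :: pt4
  have "sphere2_int f = integral\<^sup>L lborel (\<lambda>x. indicator D4 x *\<^sub>R F x)"
    by (simp add: sphere2_int_def set_lebesgue_integral_def F_def D4_def)
  moreover have "sphere2_int (\<lambda>a b c d. f a (b + g) c (d + g)) =
      integral\<^sup>L lborel (\<lambda>x. indicator D4 x *\<^sub>R F ((fst (fst x), snd (fst x) + g), (fst (snd x), snd (snd x) + g)))"
    by (simp add: sphere2_int_def set_lebesgue_integral_def F_def D4_def)
  moreover have "integral\<^sup>L lborel (\<lambda>x. indicator D4 x *\<^sub>R F ((fst (fst x), snd (fst x) + g), (fst (snd x), snd (snd x) + g)))
      = integral\<^sup>L lborel (\<lambda>x. indicator D4 x *\<^sub>R F x)"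
    by (rule shift_both) (auto simp: F_def peri pero g)
  ultimately show ?thesis by simp
qed

lemma sph_per: "sph t (p + 2*pi) = sph t p"
  by (simp add: sph_def)

lemma Ftp_per: "Ftp t (p + 2*pi) = Ftp t p"
  by (simp add: Ftp_def sph_def)

lemma Ptp_per_i: "Ptp P a (b + 2*pi) c d = Ptp P a b c d"
  by (simp add: Ptp_def sph_per Ftp_per)

lemma Ptp_per_o: "Ptp P a b c (d + 2*pi) = Ptp P a b c d"
  by (simp add: Ptp_def sph_per Ftp_per)

lemma Ptp_shift:
  assumes "isotropic P"
  shows "Ptp P a (b + g) c (d + g) = Ptp P a b c d"
proof -
  have "P (rotz g (sph a b)) (rotz g (sph c d)) (rotz_frame g (Ftp a b)) (rotz_frame g (Ftp c d))
      = P (sph a b) (sph c d) (Ftp a b) (Ftp c d)"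
    using assms local_frame_Ftp unfolding isotropic_def by blast
  then show ?thesis
    by (simp add: Ptp_def rotz_sph rotz_frame_Ftp)
qed

lemma cis_int_2pi: "cis (of_int m * (p + 2*pi)) = cis (of_int m * p)"
proof -
  have "cis (of_int m * (p + 2*pi)) = cis (of_int m * p) * cis (2 * pi * of_int m)"
    by (simp add: cis_mult[symmetric] algebra_simps)
  also have "cis (2 * pi * of_int m) = 1"
    by (simp add: cis.ctr cos_int_2pin sin_int_2pin Complex_eq_1)
  finally show ?thesis by simp
qed

lemma ylm_shift: "ylm l m t (p + g) = cis (of_int m * g) * ylm l m t p"
  by (simp add: ylm_def distrib_left cis_mult[symmetric] algebra_simps)

lemma ylm_per: "ylm l m t (p + 2*pi) = ylm l m t p"
  by (simp add: ylm_def cis_int_2pi)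

lemma y2lm_shift: "y2lm l m t (p + g) = cis (of_int m * g) * y2lm l m t p"
  unfolding y2lm_def ylm_shift by (simp add: algebra_simps)

lemma y2lm_per: "y2lm l m t (p + 2*pi) = y2lm l m t p"
  by (simp add: y2lm_def ylm_per)

lemma sphere2_int_cmult:
  fixes f :: "real \<Rightarrow> real \<Rightarrow> real \<Rightarrow> real \<Rightarrow> complex"
  shows "sphere2_int (\<lambda>a b c d. z * f a b c d) = z * sphere2_int f"
  unfolding sphere2_int_def set_lebesgue_integral_def
  apply (subst integral_mult_right_zero[symmetric])
  apply (rule arg_cong[where f="integral\<^sup>L lborel"])
  apply (rule ext)
  apply (simp add: scaleR_conv_of_real algebra_simps)
  done

lemma cis_pi_abs:
  fixes k :: int assumes "k \<noteq> 0"
  shows "cis (of_int k * (pi / of_int \<bar>k\<bar>)) = -1"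
proof (cases "k > 0")
  case True
  then have "of_int k * (pi / of_int \<bar>k\<bar>) = pi" by simp
  then show ?thesis by simp
next
  case False
  with assms have "k < 0" by simp
  then have "of_int k * (pi / of_int \<bar>k\<bar>) = - pi" by simp
  then show ?thesis by (simp add: cis.ctr Complex_eq_neg_1)
qed

lemma g_range:
  fixes k :: int assumes "k \<noteq> 0"
  shows "0 \<le> pi / of_int \<bar>k\<bar>" "pi / of_int \<bar>k\<bar> \<le> 2 * pi"
proof -
  have "1 \<le> \<bar>k\<bar>" using assms by linarith
  then have "(1::real) \<le> of_int \<bar>k\<bar>" by (metis of_int_1 of_int_le_iff)
  then show "0 \<le> pi / of_int \<bar>k\<bar>" "pi / of_int \<bar>k\<bar> \<le> 2 * pi"
    by (auto simp: field_simps)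
qed

lemma tilde_iso_zero:
  assumes iso: "isotropic P" and ne: "mi \<noteq> mo"
  shows "tilde_iso P lo mo li mi = 0"
proof -
  define f where "f a b c d = C_iso (Ptp P a b c d) * cnj (y2lm lo mo c d) * y2lm li mi a b" for a b c d
  define k where "k = mi - mo"
  have k0: "k \<noteq> 0" using ne by (simp add: k_def)
  define g where "g = pi / of_int \<bar>k\<bar>"
  have cg: "cis (of_int k * g) = -1" unfolding g_def by (rule cis_pi_abs[OF k0])
  have g0: "0 \<le> g" "g \<le> 2 * pi" unfolding g_def by (rule g_range[OF k0])+
  have sh: "f a (b + g) c (d + g) = cis (of_int k * g) * f a b c d" for a b c d
    by (simp add: f_def Ptp_shift[OF iso] y2lm_shift k_def cis_cnj cis_mult algebra_simps)
  have T: "tilde_iso P lo mo li mi = sphere2_int f"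
    by (simp add: tilde_iso_def f_def[abs_def])
  have "sphere2_int f = sphere2_int (\<lambda>a b c d. f a (b + g) c (d + g))"
    by (rule sphere2_int_shift[symmetric])
       (auto simp: f_def Ptp_per_i Ptp_per_o y2lm_per g0)
  also have "\<dots> = sphere2_int (\<lambda>a b c d. (-1) * f a b c d)"
    by (simp only: sh cg)
  also have "\<dots> = - sphere2_int f"
    by (subst sphere2_int_cmult) simp
  finally show ?thesis using T by simp
qed

lemma tilde_conj_zero:
  assumes iso: "isotropic P" and ne: "mi \<noteq> - mo"
  shows "tilde_conj P lo mo li mi = 0"
proof -
  define f where "f a b c d = C_conj (Ptp P a b c d) * cnj (y2lm lo mo c d) * cnj (y2lm li mi a b)" for a b c d
  define k where "k = - (mi + mo)"
  have k0: "k \<noteq> 0" using ne by (simp add: k_def)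
  define g where "g = pi / of_int \<bar>k\<bar>"
  have cg: "cis (of_int k * g) = -1" unfolding g_def by (rule cis_pi_abs[OF k0])
  have g0: "0 \<le> g" "g \<le> 2 * pi" unfolding g_def by (rule g_range[OF k0])+
  have sh: "f a (b + g) c (d + g) = cis (of_int k * g) * f a b c d" for a b c d
    by (simp add: f_def Ptp_shift[OF iso] y2lm_shift k_def cis_cnj cis_mult algebra_simps)
  have T: "tilde_conj P lo mo li mi = sphere2_int f"
    by (simp add: tilde_conj_def f_def[abs_def])
  have "sphere2_int f = sphere2_int (\<lambda>a b c d. f a (b + g) c (d + g))"
    by (rule sphere2_int_shift[symmetric])
       (auto simp: f_def Ptp_per_i Ptp_per_o y2lm_per g0)
  also have "\<dots> = sphere2_int (\<lambda>a b c d. (-1) * f a b c d)"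
    by (simp only: sh cg)
  also have "\<dots> = - sphere2_int f"
    by (subst sphere2_int_cmult) simp
  finally show ?thesis using T by simp
qed

definition good :: "(real \<Rightarrow> real \<Rightarrow> real^4) \<Rightarrow> bool" where
  "good u \<longleftrightarrow> (\<exists>B. \<forall>a b j. \<bar>u a b $ j\<bar> \<le> B) \<and> (\<lambda>x. u (fst x) (snd x)) \<in> borel_measurable borel"

lemma vec_meas:
  fixes f :: "'a \<Rightarrow> real^'n"
  assumes "\<And>i. (\<lambda>x. f x $ i) \<in> borel_measurable M"
  shows "f \<in> borel_measurable M"
proof -
  have "f = (\<lambda>x. \<Sum>i\<in>UNIV. (f x $ i) *\<^sub>R axis i 1)"
    by (simp add: basis_expansion scalar_mult_eq_scaleR[symmetric])
  also have "\<dots> \<in> borel_measurable M"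
    using assms by (intro borel_measurable_sum borel_measurable_scaleR) auto
  finally show ?thesis .
qed

lemma vec_int:
  fixes f :: "'a \<Rightarrow> real^'n"
  assumes "\<And>i. integrable M (\<lambda>x. f x $ i)"
  shows "integrable M f"
proof -
  have e: "f = (\<lambda>x. \<Sum>i\<in>UNIV. (f x $ i) *\<^sub>R axis i 1)"
    by (simp add: basis_expansion scalar_mult_eq_scaleR[symmetric])
  have "integrable M (\<lambda>x. \<Sum>i\<in>UNIV. (f x $ i) *\<^sub>R axis i 1)"
    apply (rule Bochner_Integration.integrable_sum)
    apply (rule integrable_scaleR_left)
    using assms by auto
  then show ?thesis by (subst e)
qed

lemma good_meas_comp:
  assumes "good u" "f \<in> measurable M borel" "g \<in> measurable M borel"
  shows "(\<lambda>x. u (f x) (g x) $ j) \<in> borel_measurable M"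
proof -
  have m: "(\<lambda>x. u (fst x) (snd x)) \<in> borel_measurable borel" using assms(1) by (simp add: good_def)
  have "(\<lambda>x. (f x, g x)) \<in> measurable M borel"
    using assms(2,3) by (simp add: borel_prod[symmetric])
  then have "(\<lambda>x. (\<lambda>y. u (fst y) (snd y)) (f x, g x)) \<in> borel_measurable M"
    by (rule measurable_compose) (rule m)
  then have "(\<lambda>x. u (f x) (g x)) \<in> borel_measurable M" by simp
  from measurable_compose[OF this borel_measurable_nth] show ?thesis by simp
qed

lemma good_bound:
  assumes "good u" obtains B where "\<And>a b j. \<bar>u a b $ j\<bar> \<le> B" "0 \<le> B"
proof -
  obtain B where B: "\<And>a b j. \<bar>u a b $ j\<bar> \<le> B" using assms by (auto simp: good_def)
  moreover have "0 \<le> B" using B[of 0 0 0] by simp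
  ultimately show ?thesis using that by blast
qed

definition Qjk :: "mueller_field \<Rightarrow> 4 \<Rightarrow> 4 \<Rightarrow> pt4 \<Rightarrow> real" where
  "Qjk P j k x = indicator (S2dom \<times> S2dom) x *\<^sub>R
     (sin (fst (fst x)) * sin (fst (snd x)) * Ptp P (fst (fst x)) (snd (fst x)) (fst (snd x)) (snd (snd x)) $ j $ k)"

lemma Qjk_int: "integrable_field P \<Longrightarrow> integrable lborel (Qjk P j k)"
  unfolding integrable_field_def Qjk_def set_integrable_def by blast

definition JF :: "mueller_field \<Rightarrow> (real \<Rightarrow> real \<Rightarrow> real^4) \<Rightarrow> (real \<Rightarrow> real \<Rightarrow> real^4) \<Rightarrow> pt4 \<Rightarrow> real" where
  "JF P u v x = indicator D4 x *\<^sub>R ((sin (fst (fst x)) * sin (fst (snd x))) *\<^sub>R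
      (u (fst (snd x)) (snd (snd x)) \<bullet> (Ptp P (fst (fst x)) (snd (fst x)) (fst (snd x)) (snd (snd x)) *v v (fst (fst x)) (snd (fst x)))))"

lemma JF_expand:
  "JF P u v x = (\<Sum>j\<in>UNIV. \<Sum>k\<in>UNIV. u (fst (snd x)) (snd (snd x)) $ j * v (fst (fst x)) (snd (fst x)) $ k * Qjk P j k x)"
  by (simp add: JF_def Qjk_def D4_def inner_vec_def matrix_vector_mult_def sum_distrib_left algebra_simps)

lemma int_bounded_mult:
  fixes Q w :: "'a \<Rightarrow> real"
  assumes "integrable M Q" "w \<in> borel_measurable M" "\<And>x. \<bar>w x\<bar> \<le> B"
  shows "integrable M (\<lambda>x. w x * Q x)"
proof (rule Bochner_Integration.integrable_bound[where M=M and f="\<lambda>x. B * Q x"])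
  show "integrable M (\<lambda>x. B * Q x)" using assms(1) by simp
  show "(\<lambda>x. w x * Q x) \<in> borel_measurable M" using assms(1,2) by auto
  show "AE x in M. norm (w x * Q x) \<le> norm (B * Q x)"
  proof (rule AE_I2)
    fix x
    have "\<bar>w x\<bar> * \<bar>Q x\<bar> \<le> B * \<bar>Q x\<bar>" using assms(3)[of x] by (simp add: mult_right_mono)
    moreover have "0 \<le> B" using assms(3)[of x] by linarith
    ultimately show "norm (w x * Q x) \<le> norm (B * Q x)" by (simp add: abs_mult)
  qed
qed

lemma meas_pt4:
  "(\<lambda>x::pt4. fst (fst x)) \<in> borel_measurable borel" "(\<lambda>x::pt4. snd (fst x)) \<in> borel_measurable borel"
  "(\<lambda>x::pt4. fst (snd x)) \<in> borel_measurable borel" "(\<lambda>x::pt4. snd (snd x)) \<in> borel_measurable borel"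
  by (intro borel_measurable_continuous_onI continuous_intros)+

lemma JF_int:
  assumes P: "integrable_field P" and u: "good u" and v: "good v"
  shows "integrable lborel (JF P u v)"
proof -
  obtain Bu where Bu: "\<And>a b j. \<bar>u a b $ j\<bar> \<le> Bu" "0 \<le> Bu" using good_bound[OF u] by blast
  obtain Bv where Bv: "\<And>a b j. \<bar>v a b $ j\<bar> \<le> Bv" "0 \<le> Bv" using good_bound[OF v] by blast
  have ij: "integrable lborel (\<lambda>x. (u (fst (snd x)) (snd (snd x)) $ j * v (fst (fst x)) (snd (fst x)) $ k) * Qjk P j k x)" for j k
  proof (rule int_bounded_mult[where B="Bu * Bv"])
    show "integrable lborel (Qjk P j k)" by (rule Qjk_int[OF P])
    show "(\<lambda>x. u (fst (snd x)) (snd (snd x)) $ j * v (fst (fst x)) (snd (fst x)) $ k) \<in> borel_measurable lborel"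
      using good_meas_comp[OF u, of "\<lambda>x::pt4. fst (snd x)" lborel "\<lambda>x. snd (snd x)" j]
            good_meas_comp[OF v, of "\<lambda>x::pt4. fst (fst x)" lborel "\<lambda>x. snd (fst x)" k]
      by (simp add: borel_measurable_times meas_pt4)
    show "\<bar>u (fst (snd x)) (snd (snd x)) $ j * v (fst (fst x)) (snd (fst x)) $ k\<bar> \<le> Bu * Bv" for x
      by (simp add: abs_mult mult_mono Bu Bv)
  qed
  show ?thesis
    unfolding JF_expand[abs_def]
    apply (rule Bochner_Integration.integrable_sum[where f="\<lambda>j x. \<Sum>k\<in>UNIV. u (fst (snd x)) (snd (snd x)) $ j * v (fst (fst x)) (snd (fst x)) $ k * Qjk P j k x"])
    apply (rule Bochner_Integration.integrable_sum[where f="\<lambda>k x. u (fst (snd x)) (snd (snd x)) $ j * v (fst (fst x)) (snd (fst x)) $ k * Qjk P j k x" for j])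
    using ij by (simp add: mult.assoc)
qed

definition hv :: "mueller_field \<Rightarrow> (real \<Rightarrow> real \<Rightarrow> real^4) \<Rightarrow> pt4 \<Rightarrow> real^4" where
  "hv P v x = (indicator D4 x * sin (fst (fst x)) * sin (fst (snd x))) *\<^sub>R
      (Ptp P (fst (fst x)) (snd (fst x)) (fst (snd x)) (snd (snd x)) *v v (fst (fst x)) (snd (fst x)))"

lemma hv_comp: "hv P v x $ j = (\<Sum>k\<in>UNIV. v (fst (fst x)) (snd (fst x)) $ k * Qjk P j k x)"
  by (simp add: hv_def Qjk_def D4_def matrix_vector_mult_def sum_distrib_left algebra_simps)

lemma JF_hv: "JF P u v x = u (fst (snd x)) (snd (snd x)) \<bullet> hv P v x"
  by (simp add: JF_def hv_def algebra_simps)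

lemma hv_comp_int:
  assumes P: "integrable_field P" and v: "good v"
  shows "integrable lborel (\<lambda>x. v (fst (fst x)) (snd (fst x)) $ k * Qjk P j k x)"
proof -
  obtain Bv where Bv: "\<And>a b j. \<bar>v a b $ j\<bar> \<le> Bv" "0 \<le> Bv" using good_bound[OF v] by blast
  show ?thesis
  proof (rule int_bounded_mult[where B=Bv])
    show "integrable lborel (Qjk P j k)" by (rule Qjk_int[OF P])
    show "(\<lambda>x::pt4. v (fst (fst x)) (snd (fst x)) $ k) \<in> borel_measurable lborel"
      using good_meas_comp[OF v, of "\<lambda>x::pt4. fst (fst x)" lborel "\<lambda>x. snd (fst x)" k]
      by (simp add: meas_pt4)
    show "\<bar>v (fst (fst x)) (snd (fst x)) $ k\<bar> \<le> Bv" for x by (rule Bv)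
  qed
qed

lemma hv_meas:
  assumes P: "integrable_field P" and v: "good v"
  shows "hv P v \<in> borel_measurable lborel"
proof (rule vec_meas)
  fix j
  have "(\<lambda>x. \<Sum>k\<in>UNIV. v (fst (fst x)) (snd (fst x)) $ k * Qjk P j k x) \<in> borel_measurable lborel"
    using hv_comp_int[OF P v] by (intro borel_measurable_sum) auto
  then show "(\<lambda>x. hv P v x $ j) \<in> borel_measurable lborel" by (simp add: hv_comp)
qed

lemma coeff_joint:
  assumes P: "integrable_field P" and u: "good u" and v: "good v"
  shows "sphere_int (\<lambda>to po. u to po \<bullet> sphere_int (\<lambda>ti pi. Ptp P ti pi to po *v v ti pi))
       = integral\<^sup>L lborel (JF P u v)"
proof -
  define H where "H o' = integral\<^sup>L lborel (\<lambda>i. hv P v (i, o'))" for o'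
  have outer: "indicator S2dom o' *\<^sub>R (sin (fst o') *\<^sub>R (u (fst o') (snd o') \<bullet>
        sphere_int (\<lambda>ti pi. Ptp P ti pi (fst o') (snd o') *v v ti pi)))
      = u (fst o') (snd o') \<bullet> H o'" for o' :: "real \<times> real"
  proof -
    have "(indicator S2dom o' * sin (fst o')) *\<^sub>R
            sphere_int (\<lambda>ti pi. Ptp P ti pi (fst o') (snd o') *v v ti pi) = H o'"
      unfolding sphere_int_def set_lebesgue_integral_def H_def
      apply (subst integral_scaleR_right[symmetric])
      apply (rule arg_cong[where f="integral\<^sup>L lborel"])
      apply (rule ext)
      apply (simp add: hv_def D4_def indicator_times algebra_simps)
      done
    then have "u (fst o') (snd o') \<bullet> H o' = (indicator S2dom o' * sin (fst o')) *
        (u (fst o') (snd o') \<bullet> sphere_int (\<lambda>ti pi. Ptp P ti pi (fst o') (snd o') *v v ti pi))"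
      by (simp only: inner_scaleR_right[symmetric])
    then show ?thesis by (simp add: mult.assoc)
  qed
  have JFint: "integrable lborel (JF P u v)" by (rule JF_int[OF P u v])
  have JFint2: "integrable (lborel \<Otimes>\<^sub>M lborel) (case_prod (\<lambda>i o'. JF P u v (i, o')))"
    using JFint by (simp add: lborel_prod)
  note F = lborel_pair.integral_snd[OF JFint2] lborel_pair.integrable_snd[OF JFint2]
  have AEint: "AE o' in lborel. integrable lborel (\<lambda>i. hv P v (i, o'))"
  proof -
    have "AE o' in lborel. \<forall>jk\<in>UNIV. integrable lborel (\<lambda>i. v (fst i) (snd i) $ snd jk * Qjk P (fst jk) (snd jk) (i, o'))"
    proof (rule AE_finite_allI, simp)
      fix jk :: "4 \<times> 4"
      have "integrable (lborel \<Otimes>\<^sub>M lborel) (case_prod (\<lambda>i o'. v (fst i) (snd i) $ snd jk * Qjk P (fst jk) (snd jk) (i, o')))"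
        using hv_comp_int[OF P v, of "snd jk" "fst jk"] by (simp add: lborel_prod case_prod_beta')
      from lborel_pair.AE_integrable_snd[OF this]
      show "AE o' in lborel. integrable lborel (\<lambda>i. v (fst i) (snd i) $ snd jk * Qjk P (fst jk) (snd jk) (i, o'))" .
    qed
    then show ?thesis
    proof (rule AE_mp, intro AE_I2 impI)
      fix o' assume a: "\<forall>jk\<in>UNIV. integrable lborel (\<lambda>i. v (fst i) (snd i) $ snd jk * Qjk P (fst jk) (snd jk) (i, o'))"
      show "integrable lborel (\<lambda>i. hv P v (i, o'))"
      proof (rule vec_int)
        fix j
        have "integrable lborel (\<lambda>i. \<Sum>k\<in>UNIV. v (fst i) (snd i) $ k * Qjk P j k (i, o'))"
          apply (rule Bochner_Integration.integrable_sum)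
          subgoal for k using a[rule_format, of "(j,k)"] by simp
          done
        then show "integrable lborel (\<lambda>i. hv P v (i, o') $ j)" by (simp add: hv_comp)
      qed
    qed
  qed
  have "sphere_int (\<lambda>to po. u to po \<bullet> sphere_int (\<lambda>ti pi. Ptp P ti pi to po *v v ti pi))
      = integral\<^sup>L lborel (\<lambda>o'. u (fst o') (snd o') \<bullet> H o')"
    unfolding sphere_int_def[of "\<lambda>to po. u to po \<bullet> sphere_int (\<lambda>ti pi. Ptp P ti pi to po *v v ti pi)"]
      set_lebesgue_integral_def
    by (simp only: outer)
  also have "\<dots> = integral\<^sup>L lborel (\<lambda>o'. integral\<^sup>L lborel (\<lambda>i. JF P u v (i, o')))"
  proof (rule integral_cong_AE)
    have "(\<lambda>(o', i). hv P v (i, o')) \<in> borel_measurable (lborel \<Otimes>\<^sub>M lborel)"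
    proof -
      have "hv P v \<in> borel_measurable (lborel \<Otimes>\<^sub>M lborel)"
        using hv_meas[OF P v] by (simp add: lborel_prod)
      then show ?thesis using measurable_pair_swap_iff[of "hv P v" lborel lborel borel] by simp
    qed
    then have "H \<in> borel_measurable lborel"
      unfolding H_def using lborel.borel_measurable_lebesgue_integral[of "\<lambda>o' i. hv P v (i, o')" lborel]
      by simp
    moreover have "(\<lambda>o'. u (fst o') (snd o')) \<in> borel_measurable lborel"
      using u by (simp add: good_def)
    ultimately show "(\<lambda>o'. u (fst o') (snd o') \<bullet> H o') \<in> borel_measurable lborel"
      by (intro borel_measurable_inner) auto
    show "(\<lambda>o'. integral\<^sup>L lborel (\<lambda>i. JF P u v (i, o'))) \<in> borel_measurable lborel"
      using F(2) by (rule borel_measurable_integrable)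
    show "AE o' in lborel. u (fst o') (snd o') \<bullet> H o' = integral\<^sup>L lborel (\<lambda>i. JF P u v (i, o'))"
      using AEint
    proof (rule AE_mp, intro AE_I2 impI)
      fix o' assume "integrable lborel (\<lambda>i. hv P v (i, o'))"
      then show "u (fst o') (snd o') \<bullet> H o' = integral\<^sup>L lborel (\<lambda>i. JF P u v (i, o'))"
        by (simp add: H_def JF_hv)
    qed
  qed
  also have "\<dots> = integral\<^sup>L lborel (JF P u v)"
    using F(1) by (simp add: lborel_prod)
  finally show ?thesis .
qed

definition JJ :: "mueller_field \<Rightarrow> (real \<Rightarrow> real \<Rightarrow> real^4) \<Rightarrow> (real \<Rightarrow> real \<Rightarrow> real^4) \<Rightarrow> real" where
  "JJ P u v = integral\<^sup>L lborel (JF P u v)"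

lemma good_lin:
  assumes u1: "good u1" and u2: "good u2"
  shows "good (\<lambda>a b. c *\<^sub>R u1 a b + d *\<^sub>R u2 a b)"
proof -
  obtain B1 where B1: "\<And>a b j. \<bar>u1 a b $ j\<bar> \<le> B1" "0 \<le> B1" using good_bound[OF u1] by blast
  obtain B2 where B2: "\<And>a b j. \<bar>u2 a b $ j\<bar> \<le> B2" "0 \<le> B2" using good_bound[OF u2] by blast
  have "\<bar>(c *\<^sub>R u1 a b + d *\<^sub>R u2 a b) $ j\<bar> \<le> \<bar>c\<bar> * B1 + \<bar>d\<bar> * B2" for a b j
  proof -
    have "\<bar>(c *\<^sub>R u1 a b + d *\<^sub>R u2 a b) $ j\<bar> \<le> \<bar>c\<bar> * \<bar>u1 a b $ j\<bar> + \<bar>d\<bar> * \<bar>u2 a b $ j\<bar>"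
      by (simp add: abs_mult[symmetric] abs_triangle_ineq)
    also have "\<dots> \<le> \<bar>c\<bar> * B1 + \<bar>d\<bar> * B2"
      by (intro add_mono mult_left_mono B1 B2) auto
    finally show ?thesis .
  qed
  moreover have "(\<lambda>x. c *\<^sub>R u1 (fst x) (snd x) + d *\<^sub>R u2 (fst x) (snd x)) \<in> borel_measurable borel"
    using u1 u2 unfolding good_def by (intro borel_measurable_add borel_measurable_scaleR) auto
  ultimately show ?thesis unfolding good_def by blast
qed

lemma JJ_lin_left:
  assumes P: "integrable_field P" and u1: "good u1" and u2: "good u2" and v: "good v"
  shows "JJ P (\<lambda>a b. c *\<^sub>R u1 a b + d *\<^sub>R u2 a b) v = c * JJ P u1 v + d * JJ P u2 v"
proof -
  have "JF P (\<lambda>a b. c *\<^sub>R u1 a b + d *\<^sub>R u2 a b) v = (\<lambda>x. c * JF P u1 v x + d * JF P u2 v x)"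
    by (simp add: JF_def fun_eq_iff inner_add_left algebra_simps)
  then show ?thesis unfolding JJ_def using JF_int[OF P u1 v] JF_int[OF P u2 v] by simp
qed

lemma JJ_lin_right:
  assumes P: "integrable_field P" and u: "good u" and v1: "good v1" and v2: "good v2"
  shows "JJ P u (\<lambda>a b. c *\<^sub>R v1 a b + d *\<^sub>R v2 a b) = c * JJ P u v1 + d * JJ P u v2"
proof -
  have "JF P u (\<lambda>a b. c *\<^sub>R v1 a b + d *\<^sub>R v2 a b) = (\<lambda>x. c * JF P u v1 x + d * JF P u v2 x)"
    by (simp add: JF_def fun_eq_iff matrix_vector_right_distrib inner_add_right algebra_simps)
  then show ?thesis unfolding JJ_def using JF_int[OF P u v1] JF_int[OF P u v2] by simp
qed

lemma JJ_shift:
  assumes iso: "isotropic P"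
    and pu: "\<And>a b. u a (b + 2*pi) = u a b" and pv: "\<And>a b. v a (b + 2*pi) = v a b"
    and g: "0 \<le> g" "g \<le> 2*pi"
  shows "JJ P (\<lambda>a b. u a (b + g)) (\<lambda>a b. v a (b + g)) = JJ P u v"
proof -
  have "JJ P u v = sphere2_int (\<lambda>a b c d. u c d \<bullet> (Ptp P a b c d *v v a b))"
    by (simp add: JJ_def JF_def[abs_def] sphere2_int_def set_lebesgue_integral_def D4_def)
  moreover have "JJ P (\<lambda>a b. u a (b + g)) (\<lambda>a b. v a (b + g))
     = sphere2_int (\<lambda>a b c d. u c (d + g) \<bullet> (Ptp P a (b + g) c (d + g) *v v a (b + g)))"
    by (simp add: JJ_def JF_def[abs_def] sphere2_int_def set_lebesgue_integral_def D4_def Ptp_shift[OF iso])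
  moreover have "sphere2_int (\<lambda>a b c d. u c (d + g) \<bullet> (Ptp P a (b + g) c (d + g) *v v a (b + g)))
      = sphere2_int (\<lambda>a b c d. u c d \<bullet> (Ptp P a b c d *v v a b))"
    by (rule sphere2_int_shift[where f="\<lambda>a b c d. u c d \<bullet> (Ptp P a b c d *v v a b)"])
       (auto simp: pu pv Ptp_per_i Ptp_per_o g)
  ultimately show ?thesis by simp
qed

definition rotpair :: "(real \<Rightarrow> real \<Rightarrow> real^4) \<Rightarrow> (real \<Rightarrow> real \<Rightarrow> real^4) \<Rightarrow> int \<Rightarrow> bool" where
  "rotpair e e' n \<longleftrightarrow> good e \<and> good e' \<and>
     (\<forall>a b. e a (b + 2*pi) = e a b) \<and> (\<forall>a b. e' a (b + 2*pi) = e' a b) \<and>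
     (\<forall>a b g. e a (b + g) = cos (of_int n * g) *\<^sub>R e a b + sin (of_int n * g) *\<^sub>R e' a b) \<and>
     (\<forall>a b g. e' a (b + g) = (- sin (of_int n * g)) *\<^sub>R e a b + cos (of_int n * g) *\<^sub>R e' a b)"

lemma JJ_quad:
  assumes P: "integrable_field P" and "good u1" "good u2" "good v1" "good v2"
  shows "JJ P (\<lambda>a b. a1 *\<^sub>R u1 a b + a2 *\<^sub>R u2 a b) (\<lambda>a b. b1 *\<^sub>R v1 a b + b2 *\<^sub>R v2 a b)
    = a1 * b1 * JJ P u1 v1 + a1 * b2 * JJ P u1 v2 + a2 * b1 * JJ P u2 v1 + a2 * b2 * JJ P u2 v2"
proof -
  have "JJ P (\<lambda>a b. a1 *\<^sub>R u1 a b + a2 *\<^sub>R u2 a b) (\<lambda>a b. b1 *\<^sub>R v1 a b + b2 *\<^sub>R v2 a b)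
      = a1 * JJ P u1 (\<lambda>a b. b1 *\<^sub>R v1 a b + b2 *\<^sub>R v2 a b) + a2 * JJ P u2 (\<lambda>a b. b1 *\<^sub>R v1 a b + b2 *\<^sub>R v2 a b)"
    by (rule JJ_lin_left[OF P assms(2,3) good_lin[OF assms(4,5)]])
  also have "\<dots> = a1 * (b1 * JJ P u1 v1 + b2 * JJ P u1 v2) + a2 * (b1 * JJ P u2 v1 + b2 * JJ P u2 v2)"
    by (simp only: JJ_lin_right[OF P assms(2) assms(4,5)] JJ_lin_right[OF P assms(3) assms(4,5)])
  finally show ?thesis by (simp only: distrib_left mult.assoc)
qed

lemma sgn_eqn: "(- sA) * (- sB) * X1 + (- sA) * cB * X2 + cA * (- sB) * X3 + cA * cB * X4
   = sA * sB * X1 - sA * cB * X2 - cA * sB * X3 + cA * cB * (X4::real)"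
  by simp

lemma JJ_eqs:
  assumes P: "integrable_field P" and iso: "isotropic P"
    and ro: "rotpair eo eo' no" and ri: "rotpair ei ei' ni"
    and g: "0 \<le> g" "g \<le> 2*pi"
  defines "cA \<equiv> cos (of_int no * g)" and "sA \<equiv> sin (of_int no * g)"
    and "cB \<equiv> cos (of_int ni * g)" and "sB \<equiv> sin (of_int ni * g)"
  shows "JJ P eo ei = cA * cB * JJ P eo ei + cA * sB * JJ P eo ei' + sA * cB * JJ P eo' ei + sA * sB * JJ P eo' ei'"
    and "JJ P eo' ei' = sA * sB * JJ P eo ei - sA * cB * JJ P eo ei' - cA * sB * JJ P eo' ei + cA * cB * JJ P eo' ei'"
proof -
  note ro' = ro[unfolded rotpair_def] and ri' = ri[unfolded rotpair_def]
  have go: "good eo" "good eo'" using ro' by auto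
  have gi: "good ei" "good ei'" using ri' by auto
  have po: "\<And>a b. eo a (b + 2*pi) = eo a b" "\<And>a b. eo' a (b + 2*pi) = eo' a b" using ro' by auto
  have pi: "\<And>a b. ei a (b + 2*pi) = ei a b" "\<And>a b. ei' a (b + 2*pi) = ei' a b" using ri' by auto
  have "JJ P eo ei = JJ P (\<lambda>a b. eo a (b + g)) (\<lambda>a b. ei a (b + g))"
    using JJ_shift[where u=eo and v=ei, OF iso po(1) pi(1) g] by simp
  also have "(\<lambda>a b. eo a (b + g)) = (\<lambda>a b. cA *\<^sub>R eo a b + sA *\<^sub>R eo' a b)"
    using ro' by (simp add: cA_def sA_def)
  also have "(\<lambda>a b. ei a (b + g)) = (\<lambda>a b. cB *\<^sub>R ei a b + sB *\<^sub>R ei' a b)"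
    using ri' by (simp add: cB_def sB_def)
  also have "JJ P (\<lambda>a b. cA *\<^sub>R eo a b + sA *\<^sub>R eo' a b) (\<lambda>a b. cB *\<^sub>R ei a b + sB *\<^sub>R ei' a b)
     = cA * cB * JJ P eo ei + cA * sB * JJ P eo ei' + sA * cB * JJ P eo' ei + sA * sB * JJ P eo' ei'"
    by (rule JJ_quad[OF P go gi])
  finally show "JJ P eo ei = cA * cB * JJ P eo ei + cA * sB * JJ P eo ei' + sA * cB * JJ P eo' ei + sA * sB * JJ P eo' ei'" .
  have "JJ P eo' ei' = JJ P (\<lambda>a b. eo' a (b + g)) (\<lambda>a b. ei' a (b + g))"
    using JJ_shift[where u=eo' and v=ei', OF iso po(2) pi(2) g] by simp
  also have "(\<lambda>a b. eo' a (b + g)) = (\<lambda>a b. (- sA) *\<^sub>R eo a b + cA *\<^sub>R eo' a b)"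
    using ro' by (simp add: cA_def sA_def)
  also have "(\<lambda>a b. ei' a (b + g)) = (\<lambda>a b. (- sB) *\<^sub>R ei a b + cB *\<^sub>R ei' a b)"
    using ri' by (simp add: cB_def sB_def)
  also have "JJ P (\<lambda>a b. (- sA) *\<^sub>R eo a b + cA *\<^sub>R eo' a b) (\<lambda>a b. (- sB) *\<^sub>R ei a b + cB *\<^sub>R ei' a b)
     = (- sA) * (- sB) * JJ P eo ei + (- sA) * cB * JJ P eo ei' + cA * (- sB) * JJ P eo' ei + cA * cB * JJ P eo' ei'"
    by (rule JJ_quad[OF P go gi])
  also have "\<dots> = sA * sB * JJ P eo ei - sA * cB * JJ P eo ei' - cA * sB * JJ P eo' ei + cA * cB * JJ P eo' ei'"
    by (rule sgn_eqn)
  finally show "JJ P eo' ei' = sA * sB * JJ P eo ei - sA * cB * JJ P eo ei' - cA * sB * JJ P eo' ei + cA * cB * JJ P eo' ei'" .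
qed

lemma pair_zero:
  assumes P: "integrable_field P" and iso: "isotropic P"
    and ro: "rotpair eo eo' no" and ri: "rotpair ei ei' ni"
    and ne: "\<bar>no\<bar> \<noteq> \<bar>ni\<bar>"
  shows "JJ P eo ei = 0"
proof -
  define J11 where "J11 = JJ P eo ei"
  define J12 where "J12 = JJ P eo ei'"
  define J21 where "J21 = JJ P eo' ei"
  define J22 where "J22 = JJ P eo' ei'"
  have S: "J11 + J22 = 0"
  proof -
    define k where "k = no - ni"
    have k0: "k \<noteq> 0" using ne by (auto simp: k_def)
    define g where "g = pi / of_int \<bar>k\<bar>"
    have g0: "0 \<le> g" "g \<le> 2 * pi" unfolding g_def by (rule g_range[OF k0])+
    have ck: "cis (of_int k * g) = -1" unfolding g_def by (rule cis_pi_abs[OF k0])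
    have c: "cos (of_int k * g) = -1" using arg_cong[OF ck, of Re] by simp
    have s: "sin (of_int k * g) = 0" using arg_cong[OF ck, of Im] by simp
    define cA where "cA = cos (of_int no * g)"
    define sA where "sA = sin (of_int no * g)"
    define cB where "cB = cos (of_int ni * g)"
    define sB where "sB = sin (of_int ni * g)"
    have h1: "cA * cB + sA * sB = -1"
      using c by (simp add: k_def cA_def sA_def cB_def sB_def left_diff_distrib cos_diff)
    have h2: "sA * cB - cA * sB = 0"
      using s by (simp add: k_def cA_def sA_def cB_def sB_def left_diff_distrib sin_diff)
    note E = JJ_eqs[OF P iso ro ri g0, folded cA_def sA_def cB_def sB_def J11_def J12_def J21_def J22_def]
    have "J11 + J22 = (cA * cB + sA * sB) * (J11 + J22) - (sA * cB - cA * sB) * (J12 - J21)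
       + (J11 - (cA * cB * J11 + cA * sB * J12 + sA * cB * J21 + sA * sB * J22))
       + (J22 - (sA * sB * J11 - sA * cB * J12 - cA * sB * J21 + cA * cB * J22))"
      by (simp add: algebra_simps)
    also have "\<dots> = - (J11 + J22)"
    proof -
      have e1: "J11 - (cA * cB * J11 + cA * sB * J12 + sA * cB * J21 + sA * sB * J22) = 0" using E(1) by linarith
      have e2: "J22 - (sA * sB * J11 - sA * cB * J12 - cA * sB * J21 + cA * cB * J22) = 0" using E(2) by linarith
      show ?thesis by (simp only: h1 h2 e1 e2) simp
    qed
    finally show ?thesis by simp
  qed
  have D: "J11 - J22 = 0"
  proof -
    define k where "k = no + ni"
    have k0: "k \<noteq> 0" using ne by (auto simp: k_def)
    define g where "g = pi / of_int \<bar>k\<bar>"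
    have g0: "0 \<le> g" "g \<le> 2 * pi" unfolding g_def by (rule g_range[OF k0])+
    have ck: "cis (of_int k * g) = -1" unfolding g_def by (rule cis_pi_abs[OF k0])
    have c: "cos (of_int k * g) = -1" using arg_cong[OF ck, of Re] by simp
    have s: "sin (of_int k * g) = 0" using arg_cong[OF ck, of Im] by simp
    define cA where "cA = cos (of_int no * g)"
    define sA where "sA = sin (of_int no * g)"
    define cB where "cB = cos (of_int ni * g)"
    define sB where "sB = sin (of_int ni * g)"
    have h1: "cA * cB - sA * sB = -1"
      using c by (simp add: k_def cA_def sA_def cB_def sB_def distrib_right cos_add)
    have h2: "sA * cB + cA * sB = 0"
      using s by (simp add: k_def cA_def sA_def cB_def sB_def distrib_right sin_add)
    note E = JJ_eqs[OF P iso ro ri g0, folded cA_def sA_def cB_def sB_def J11_def J12_def J21_def J22_def]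
    have "J11 - J22 = (cA * cB - sA * sB) * (J11 - J22) + (sA * cB + cA * sB) * (J12 + J21)
       + (J11 - (cA * cB * J11 + cA * sB * J12 + sA * cB * J21 + sA * sB * J22))
       - (J22 - (sA * sB * J11 - sA * cB * J12 - cA * sB * J21 + cA * cB * J22))"
      by (simp add: algebra_simps)
    also have "\<dots> = - (J11 - J22)"
    proof -
      have e1: "J11 - (cA * cB * J11 + cA * sB * J12 + sA * cB * J21 + sA * sB * J22) = 0" using E(1) by linarith
      have e2: "J22 - (sA * sB * J11 - sA * cB * J12 - cA * sB * J21 + cA * cB * J22) = 0" using E(2) by linarith
      show ?thesis by (simp only: h1 h2 e1 e2) simp
    qed
    finally show ?thesis by simp
  qed
  from S D show ?thesis unfolding J11_def by simp
qed

lemma stokes_lin: "c *\<^sub>R stokes a1 b1 c1 d1 + s *\<^sub>R stokes a2 b2 c2 d2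
   = stokes (c*a1 + s*a2) (c*b1 + s*b2) (c*c1 + s*c2) (c*d1 + s*d2)"
  by (simp add: stokes_def vec_eq_iff)

lemma stokes_neg: "- stokes a b c d = stokes (-a) (-b) (-c) (-d)"
  by (simp add: stokes_def vec_eq_iff)

lemma stokes_comp: "\<bar>stokes a b c d $ j\<bar> \<le> \<bar>a\<bar> + \<bar>b\<bar> + \<bar>c\<bar> + \<bar>d\<bar>"
  by (simp add: stokes_def)

lemma Re_cis_mult: "Re (cis t * z) = cos t * Re z - sin t * Im z"
  by (simp add: cis.ctr)
lemma Im_cis_mult: "Im (cis t * z) = sin t * Re z + cos t * Im z"
  by (simp add: cis.ctr)

lemma psh1_rot: "psh l m 1 t (p + g) = cos (of_int m * g) *\<^sub>R psh l m 1 t p + sin (of_int m * g) *\<^sub>R psh l m 2 t p"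
  unfolding psh_def y2lm_shift by (simp add: Re_cis_mult Im_cis_mult stokes_def vec_eq_iff algebra_simps)

lemma psh2_rot: "psh l m 2 t (p + g) = (- sin (of_int m * g)) *\<^sub>R psh l m 1 t p + cos (of_int m * g) *\<^sub>R psh l m 2 t p"
  unfolding psh_def y2lm_shift by (simp add: Re_cis_mult Im_cis_mult stokes_def vec_eq_iff algebra_simps)

lemma ylm_Re_rot: "Re (ylm l m t (p + g)) = cos (of_int m * g) * Re (ylm l m t p) - sin (of_int m * g) * Im (ylm l m t p)"
  by (simp add: ylm_shift Re_cis_mult)
lemma ylm_Im_rot: "Im (ylm l m t (p + g)) = sin (of_int m * g) * Re (ylm l m t p) + cos (of_int m * g) * Im (ylm l m t p)"
  by (simp add: ylm_shift Im_cis_mult)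

lemma yreal_pos_rot:
  assumes "m > 0"
  shows "yreal l m t (p + g) = cos (of_int (-m) * g) * yreal l m t p + sin (of_int (-m) * g) * yreal l (-m) t p"
    and "yreal l (-m) t (p + g) = (- sin (of_int (-m) * g)) * yreal l m t p + cos (of_int (-m) * g) * yreal l (-m) t p"
  using assms by (simp_all add: yreal_def ylm_Re_rot ylm_Im_rot) (simp_all add: algebra_simps)

lemma yreal_neg_rot:
  assumes "m < 0"
  shows "yreal l m t (p + g) = cos (of_int (-m) * g) * yreal l m t p + sin (of_int (-m) * g) * yreal l (-m) t p"
    and "yreal l (-m) t (p + g) = (- sin (of_int (-m) * g)) * yreal l m t p + cos (of_int (-m) * g) * yreal l (-m) t p"
  using assms by (simp_all add: yreal_def ylm_Re_rot ylm_Im_rot) (simp_all add: algebra_simps)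

lemma yreal_zero_rot: "yreal l 0 t (p + g) = yreal l 0 t p"
  by (simp add: yreal_def ylm_shift)

lemma yreal_per: "yreal l m t (p + 2*pi) = yreal l m t p"
  by (simp add: yreal_def ylm_per)

lemma psh_per: "psh l m q t (p + 2*pi) = psh l m q t p"
  by (simp add: psh_def yreal_per y2lm_per)

lemma cont_meas: "continuous_on UNIV h \<Longrightarrow> f \<in> borel_measurable M \<Longrightarrow> (\<lambda>x. h (f x)) \<in> borel_measurable M"
  by (rule measurable_compose[OF _ borel_measurable_continuous_onI])

lemma alegendre_meas: "(\<lambda>y. alegendre l m y) \<in> borel_measurable borel"
proof -
  have a: "(\<lambda>y::real. (1 - y\<^sup>2) powr (of_int m / 2)) \<in> borel_measurable borel"
    by (rule powr_real_measurable) (auto intro!: borel_measurable_continuous_onI continuous_intros)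
  have b: "(\<lambda>y::real. poly p y) \<in> borel_measurable borel" for p
    by (auto intro!: borel_measurable_continuous_onI continuous_intros)
  show ?thesis unfolding alegendre_def
    using a b by (intro borel_measurable_times) auto
qed

lemma ylm_meas: "f \<in> borel_measurable M \<Longrightarrow> g \<in> borel_measurable M \<Longrightarrow> (\<lambda>x. ylm l m (f x) (g x)) \<in> borel_measurable M"
  unfolding ylm_def
  apply (intro borel_measurable_times)
   apply (rule measurable_compose[OF _ borel_measurable_of_real])
   apply (intro borel_measurable_times borel_measurable_const)
   apply (rule measurable_compose[OF _ alegendre_meas])
   apply (rule cont_meas[of cos]) apply (auto intro!: continuous_intros)[2]
  apply (rule cont_meas[of cis]) apply (auto intro!: continuous_intros)[1]
  apply (intro borel_measurable_times borel_measurable_const) apply assumption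
  done

lemma sin_cos_meas: "(\<lambda>t::real. sin t) \<in> borel_measurable borel" "(\<lambda>t::real. cos t) \<in> borel_measurable borel"
  by (auto intro!: borel_measurable_continuous_onI continuous_intros)

lemma alpha_meas: "(\<lambda>t. alpha_s2 l m t) \<in> borel_measurable borel"
  unfolding alpha_s2_def cot_def
  using sin_cos_meas
  by (intro borel_measurable_diff borel_measurable_add borel_measurable_times borel_measurable_divide
      borel_measurable_power borel_measurable_const) auto

lemma beta_meas: "(\<lambda>t. beta_s2 l m t) \<in> borel_measurable borel"
  unfolding beta_s2_def cot_def
  using sin_cos_meas
  by (intro borel_measurable_diff borel_measurable_add borel_measurable_times borel_measurable_divide
      borel_measurable_power borel_measurable_const) auto

lemma y2lm_meas: "f \<in> borel_measurable M \<Longrightarrow> g \<in> borel_measurable M \<Longrightarrow> (\<lambda>x. y2lm l m (f x) (g x)) \<in> borel_measurable M"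
  unfolding y2lm_def
  apply (intro borel_measurable_times borel_measurable_add borel_measurable_const ylm_meas)
  apply (rule measurable_compose[OF _ borel_measurable_of_real], rule measurable_compose[OF _ alpha_meas], assumption)
  apply assumption+
  apply (rule measurable_compose[OF _ borel_measurable_of_real], rule measurable_compose[OF _ beta_meas], assumption)
  apply assumption+
  done

lemma yreal_meas: "f \<in> borel_measurable M \<Longrightarrow> g \<in> borel_measurable M \<Longrightarrow> (\<lambda>x. yreal l m (f x) (g x)) \<in> borel_measurable M"
  unfolding yreal_def
  apply (cases "m > 0"; cases "m = 0")
  apply (simp_all)
  apply (intro borel_measurable_times borel_measurable_const, rule measurable_compose[OF _ borel_measurable_Re], rule ylm_meas, assumption+)
  apply (rule measurable_compose[OF _ borel_measurable_Re], rule ylm_meas, assumption+)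
  apply (intro borel_measurable_times borel_measurable_const, rule measurable_compose[OF _ borel_measurable_Im], rule ylm_meas, assumption+)
  done

lemma stokes_meas:
  "f1 \<in> borel_measurable M \<Longrightarrow> f2 \<in> borel_measurable M \<Longrightarrow> f3 \<in> borel_measurable M \<Longrightarrow> f4 \<in> borel_measurable M \<Longrightarrow>
   (\<lambda>x. stokes (f1 x) (f2 x) (f3 x) (f4 x)) \<in> borel_measurable M"
  by (rule vec_meas) (simp add: stokes_def)

lemma meas_fst_snd: "(\<lambda>x::real\<times>real. fst x) \<in> borel_measurable borel" "(\<lambda>x::real\<times>real. snd x) \<in> borel_measurable borel"
  by (intro borel_measurable_continuous_onI continuous_intros)+

lemma psh_meas: "(\<lambda>x. psh l m q (fst x) (snd x)) \<in> borel_measurable borel"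
proof -
  note y = yreal_meas[OF meas_fst_snd, of l m]
  have yr: "(\<lambda>x. Re (y2lm l m (fst x) (snd x))) \<in> borel_measurable borel"
    by (rule measurable_compose[OF _ borel_measurable_Re], rule y2lm_meas[OF meas_fst_snd])
  have yi: "(\<lambda>x. Im (y2lm l m (fst x) (snd x))) \<in> borel_measurable borel"
    by (rule measurable_compose[OF _ borel_measurable_Im], rule y2lm_meas[OF meas_fst_snd])
  have yi': "(\<lambda>x. - Im (y2lm l m (fst x) (snd x))) \<in> borel_measurable borel"
    using yi by (rule borel_measurable_uminus)
  show ?thesis unfolding psh_def
    by (cases "q = 0"; cases "q = 1"; cases "q = 2")
       (simp_all add: stokes_meas y yr yi yi')
qed

abbreviation UU :: "real poly" where "UU \<equiv> [:-1, 0, 1:]"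

lemma pderiv_UU: "pderiv UU = [:0, 2:]"
  by (simp add: pderiv_pCons)

fun rr :: "nat \<Rightarrow> nat \<Rightarrow> real poly" where
  "rr n 0 = 1"
| "rr n (Suc j) = smult (2 * real (n - j)) ([:0,1:] * rr n j) + UU * pderiv (rr n j)"

lemma V_rr: "j \<le> n \<Longrightarrow> (pderiv ^^ j) (UU ^ n) = UU ^ (n - j) * rr n j"
proof (induction j)
  case 0 then show ?case by simp
next
  case (Suc j)
  then have IH: "(pderiv ^^ j) (UU ^ n) = UU ^ (n - j) * rr n j" by simp
  obtain a where a: "n - j = Suc a" using Suc.prems by (metis Suc_diff_le Suc_le_D diff_Suc_Suc)
  have na: "n - Suc j = a" using a by simp
  have "(pderiv ^^ Suc j) (UU ^ n) = pderiv (UU ^ Suc a * rr n j)" by (simp add: IH a)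
  also have "\<dots> = UU ^ Suc a * pderiv (rr n j) + rr n j * (smult (of_nat (Suc a)) (UU ^ a) * [:0, 2:])"
    by (simp only: pderiv_mult pderiv_power_Suc pderiv_UU)
  also have "\<dots> = UU ^ a * (smult (2 * real (Suc a)) ([:0,1:] * rr n j) + UU * pderiv (rr n j))"
    by (simp add: algebra_simps smult_add_right)
  also have "\<dots> = UU ^ (n - Suc j) * rr n (Suc j)" by (simp add: na a)
  finally show ?case .
qed

lemma peq: "(\<And>x. poly p x = poly q x) \<Longrightarrow> p = (q::real poly)"
  using poly_eq_poly_eq_iff by blast

lemma aux_frac: "s \<noteq> 0 \<Longrightarrow> s * (c / (s * f)) = c / (f::real)"
  by simp

lemma aux2: "s \<noteq> 0 \<Longrightarrow> c * s * (X / (s * f)) = c * X / (f::real)"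
  by (metis aux_frac mult.assoc times_divide_eq_right)

lemma rr_at1: "j \<le> n \<Longrightarrow> poly (rr n j) 1 = 2 ^ j * fact n / fact (n - j)"
proof (induction j)
  case 0 then show ?case by simp
next
  case (Suc j)
  then have IH: "poly (rr n j) 1 = 2 ^ j * fact n / fact (n - j)" by simp
  obtain a where a: "n - j = Suc a" using Suc.prems by (metis Suc_diff_le Suc_le_D diff_Suc_Suc)
  have na: "n - Suc j = a" using a by simp
  have fS: "(fact (Suc a) :: real) = real (Suc a) * fact a" by simp
  have "poly (rr n (Suc j)) 1 = 2 * real (Suc a) * (2 ^ j * fact n / fact (Suc a))"
    by (simp add: IH a)
  also have "\<dots> = 2 * (2 ^ j * fact n) / fact a"
    unfolding fS by (rule aux2) simp
  also have "\<dots> = 2 ^ Suc j * fact n / fact a" by simp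
  finally show ?case by (simp add: na)
qed

lemma rr_atm1: "j \<le> n \<Longrightarrow> poly (rr n j) (-1) = (-2) ^ j * fact n / fact (n - j)"
proof (induction j)
  case 0 then show ?case by simp
next
  case (Suc j)
  then have IH: "poly (rr n j) (-1) = (-2) ^ j * fact n / fact (n - j)" by simp
  obtain a where a: "n - j = Suc a" using Suc.prems by (metis Suc_diff_le Suc_le_D diff_Suc_Suc)
  have na: "n - Suc j = a" using a by simp
  have fS: "(fact (Suc a) :: real) = real (Suc a) * fact a" by simp
  have "poly (rr n (Suc j)) (-1) = - (2 * real (Suc a) * ((-2) ^ j * fact n / fact (Suc a)))"
    by (simp add: IH a)
  also have "\<dots> = - (2 * ((-2) ^ j * fact n) / fact a)"
    unfolding fS by (subst aux2) simp_all
  also have "\<dots> = (- 2) * ((-2) ^ j * fact n) / fact a" by simp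
  also have "\<dots> = (-2) ^ Suc j * fact n / fact a" by simp
  finally show ?case by (simp add: na)
qed

definition VV :: "nat \<Rightarrow> nat \<Rightarrow> real poly" where "VV n k = (pderiv ^^ k) (UU ^ n)"

lemma VV_Suc: "VV n (Suc k) = pderiv (VV n k)"
  by (simp add: VV_def)

lemma ode: "UU * VV n (Suc k) + [:2 * (real k - real n):] * ([:0,1:] * VV n k)
    - [:real k * (2 * real n - real k + 1):] * VV n (k - 1) = 0"
proof (induction k)
  case 0
  show ?case
  proof (cases n)
    case 0 then show ?thesis by (simp add: VV_def)
  next
    case (Suc n')
    have "VV n 1 = smult (of_nat (Suc n')) (UU ^ n') * [:0, 2:]"
      unfolding VV_def Suc by (simp only: One_nat_def funpow.simps o_apply id_apply pderiv_power_Suc pderiv_UU)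
    then have "UU * VV n 1 = [:2 * real n:] * ([:0,1:] * UU ^ n)"
      by (intro peq) (simp add: Suc algebra_simps)
    then show ?thesis by (simp add: VV_def)
  qed
next
  case (Suc k)
  let ?c = "2 * (real k - real n)" and ?d = "real k * (2 * real n - real k + 1)"
  have d0: "[:?d:] * VV n (k - 1) = 0 \<or> VV n (Suc (k - 1)) = VV n k"
    by (cases k) auto
  have pd: "pderiv ([:?d:] * VV n (k - 1)) = [:?d:] * VV n k"
  proof (cases k)
    case 0 then show ?thesis by (simp add: pderiv_mult)
  next
    case (Suc k') then show ?thesis by (simp add: pderiv_mult pderiv_pCons VV_Suc pderiv_smult)
  qed
  have e1: "pderiv (UU * VV n (Suc k)) = [:0,2:] * VV n (Suc k) + UU * VV n (Suc (Suc k))"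
    by (simp only: pderiv_mult pderiv_UU VV_Suc[symmetric]) (intro peq, simp add: algebra_simps)
  have e2: "pderiv ([:?c:] * ([:0,1:] * VV n k)) = [:?c:] * (VV n k + [:0,1:] * VV n (Suc k))"
    by (simp only: pderiv_mult VV_Suc[symmetric]) (intro peq, simp add: pderiv_pCons algebra_simps)
  have "0 = pderiv (UU * VV n (Suc k) + [:?c:] * ([:0,1:] * VV n k) - [:?d:] * VV n (k - 1))"
    using Suc.IH by simp
  also have "\<dots> = [:0,2:] * VV n (Suc k) + UU * VV n (Suc (Suc k))
       + [:?c:] * (VV n k + [:0,1:] * VV n (Suc k)) - [:?d:] * VV n k"
    by (simp only: pderiv_diff pderiv_add e1 e2 pd)
  also have "\<dots> = UU * VV n (Suc (Suc k)) + [:2 * (real (Suc k) - real n):] * ([:0,1:] * VV n (Suc k))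
    - [:real (Suc k) * (2 * real n - real (Suc k) + 1):] * VV n (Suc k - 1)"
    by (intro peq) (simp add: algebra_simps)
  finally show ?case by simp
qed

lemma VV_deriv_at1: "poly (VV n (Suc n)) 1 = real n * (real n + 1) / 2 * poly (VV n n) 1"
proof -
  have "poly (UU * VV n (Suc (Suc n)) + [:2 * (real (Suc n) - real n):] * ([:0,1:] * VV n (Suc n))
    - [:real (Suc n) * (2 * real n - real (Suc n) + 1):] * VV n (Suc n - 1)) 1 = 0"
    by (simp only: ode) simp
  then show ?thesis by (simp add: algebra_simps)
qed

definition Qp :: "nat \<Rightarrow> int \<Rightarrow> real poly" where
  "Qp n m = (if m \<ge> 0 then smult ((-1) ^ nat m / (2 ^ n * fact n)) (VV n (nat (int n + m)))
             else smult (1 / (2 ^ n * fact n)) (rr n (nat (int n + m))))"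

lemma alegendre_rep:
  assumes mn: "\<bar>m\<bar> \<le> int n" and x: "\<bar>x\<bar> < 1"
  shows "alegendre n m x = (1 - x\<^sup>2) powr (of_int \<bar>m\<bar> / 2) * poly (Qp n m) x"
proof (cases "m \<ge> 0")
  case True
  then show ?thesis by (simp add: alegendre_def Qp_def VV_def)
next
  case False
  define k where "k = nat (- m)"
  have mk: "m = - int k" using False by (simp add: k_def)
  have kn: "k \<le> n" using mn mk by simp
  have am: "nat \<bar>m\<bar> = k" using mk by simp
  have j: "nat (int n + m) = n - k" using kn mk by simp
  have P: "0 < 1 - x\<^sup>2" using x by (simp add: abs_square_less_1)
  have V: "poly ((pderiv ^^ (n - k)) (UU ^ n)) x = (x\<^sup>2 - 1) ^ k * poly (rr n (n - k)) x"
    using V_rr[of "n - k" n] kn by (simp add: power2_eq_square algebra_simps)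
  have pw: "(1 - x\<^sup>2) powr (of_int m / 2) * (x\<^sup>2 - 1) ^ k = (-1) ^ k * (1 - x\<^sup>2) powr (of_int \<bar>m\<bar> / 2)"
  proof -
    have "(x\<^sup>2 - 1) ^ k = (-1) ^ k * (1 - x\<^sup>2) ^ k" by (simp add: power_mult_distrib[symmetric])
    also have "(1 - x\<^sup>2) ^ k = (1 - x\<^sup>2) powr (real k)" using P by (simp add: powr_realpow)
    finally have "(1 - x\<^sup>2) powr (of_int m / 2) * (x\<^sup>2 - 1) ^ k
        = (-1) ^ k * ((1 - x\<^sup>2) powr (of_int m / 2) * (1 - x\<^sup>2) powr (real k))" by simp
    also have "(1 - x\<^sup>2) powr (of_int m / 2) * (1 - x\<^sup>2) powr (real k) = (1 - x\<^sup>2) powr (of_int m / 2 + real k)"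
      by (simp add: powr_add)
    also have "of_int m / 2 + real k = of_int \<bar>m\<bar> / 2" using mk by simp
    finally show ?thesis .
  qed
  have "alegendre n m x = (-1) ^ k / (2 ^ n * fact n) * ((1 - x\<^sup>2) powr (of_int m / 2) * (x\<^sup>2 - 1) ^ k) * poly (rr n (n - k)) x"
    unfolding alegendre_def j V am by (simp add: field_simps)
  also have "\<dots> = (1 - x\<^sup>2) powr (of_int \<bar>m\<bar> / 2) * poly (Qp n m) x"
    unfolding pw using False j by (simp add: Qp_def power_mult_distrib[symmetric])
  finally show ?thesis .
qed

definition Nlm :: "nat \<Rightarrow> int \<Rightarrow> real" where
  "Nlm l m = sqrt ((2 * real l + 1) / (4 * pi) * fact (nat (int l - m)) / fact (nat (int l + m)))"

definition Kc :: "nat \<Rightarrow> int \<Rightarrow> real" where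
  "Kc l m = 2 * sqrt ((2 * real l + 1) / (2 * real l - 1) * ((real l)\<^sup>2 - (of_int m)\<^sup>2))"

definition ap :: "nat \<Rightarrow> int \<Rightarrow> real poly" where
  "ap l m = [: 2 * (of_int m)\<^sup>2 - real l * (real l + 1), - 2 * of_int m * (real l - 1), real l * (real l - 1) :]"

definition Zp :: "nat \<Rightarrow> int \<Rightarrow> real poly" where
  "Zp l m = smult (Nlm l m) (ap l m * Qp l m) + smult (Kc l m * Nlm (l - 1) m) ([:of_int m, 1:] * Qp (l - 1) m)"

lemma ylm_Nlm: "ylm l m t p = complex_of_real (Nlm l m * alegendre l m (cos t)) * cis (of_int m * p)"
  by (simp add: ylm_def Nlm_def)

lemma cos_lt1: "sin (t::real) \<noteq> 0 \<Longrightarrow> \<bar>cos t\<bar> < 1"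
proof -
  assume "sin t \<noteq> 0"
  then have "(sin t)\<^sup>2 > 0" by (simp add: zero_less_power2)
  then have "(cos t)\<^sup>2 < 1" using sin_cos_squared_add[of t] by linarith
  then show ?thesis by (simp add: abs_square_less_1)
qed

lemma radial_identity:
  assumes l: "2 \<le> l" and ml: "\<bar>m\<bar> \<le> int l" and s: "sin t \<noteq> 0"
  shows "alpha_s2 l m t * (Nlm l m * alegendre l m (cos t)) + beta_s2 l m t * (Nlm (l - 1) m * alegendre (l - 1) m (cos t))
    = (1 - (cos t)\<^sup>2) powr (of_int \<bar>m\<bar> / 2) * poly (Zp l m) (cos t) / (1 - (cos t)\<^sup>2)"
proof -
  define x where "x = cos t"
  define P where "P = 1 - x\<^sup>2"
  have x1: "\<bar>x\<bar> < 1" unfolding x_def by (rule cos_lt1[OF s])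
  have sP: "(sin t)\<^sup>2 = P" unfolding P_def x_def by (simp add: sin_squared_eq)
  have P0: "P \<noteq> 0" using s sP by auto
  have alpha: "alpha_s2 l m t = poly (ap l m) x / P"
    unfolding alpha_s2_def cot_def ap_def using P0
    by (simp add: sP[symmetric] x_def field_simps power2_eq_square)
  have beta: "beta_s2 l m t = Kc l m * (of_int m + x) / P"
    unfolding beta_s2_def cot_def Kc_def using P0
    by (simp add: sP[symmetric] x_def field_simps power2_eq_square)
  have A1: "alegendre l m x = P powr (of_int \<bar>m\<bar> / 2) * poly (Qp l m) x"
    unfolding P_def by (rule alegendre_rep[OF ml x1])
  have T2: "Kc l m * (alegendre (l - 1) m x) = Kc l m * (P powr (of_int \<bar>m\<bar> / 2) * poly (Qp (l - 1) m) x)"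
  proof (cases "\<bar>m\<bar> = int l")
    case True
    then have "(real l)\<^sup>2 - (of_int m)\<^sup>2 = 0"
      by (metis of_int_of_nat_eq power2_abs diff_self of_int_abs)
    then have "Kc l m = 0" by (simp add: Kc_def)
    then show ?thesis by simp
  next
    case False
    then have "\<bar>m\<bar> \<le> int (l - 1)" using ml l by simp
    then show ?thesis unfolding P_def by (simp add: alegendre_rep[OF _ x1])
  qed
  have "alpha_s2 l m t * (Nlm l m * alegendre l m x) + beta_s2 l m t * (Nlm (l - 1) m * alegendre (l - 1) m x)
    = poly (ap l m) x / P * (Nlm l m * (P powr (of_int \<bar>m\<bar> / 2) * poly (Qp l m) x))
      + (of_int m + x) / P * Nlm (l - 1) m * (Kc l m * alegendre (l - 1) m x)"
    unfolding alpha beta A1 by (simp add: field_simps)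
  also have "\<dots> = P powr (of_int \<bar>m\<bar> / 2) * poly (Zp l m) x / P"
    unfolding T2 Zp_def using P0 by (simp add: field_simps)
  finally show ?thesis by (simp add: x_def P_def)
qed

lemma VVnn_1: "poly (VV n n) 1 = 2 ^ n * fact n"
  using V_rr[of n n] rr_at1[of n n] by (simp add: VV_def)

lemma VVnn_m1: "poly (VV n n) (-1) = (-2) ^ n * fact n"
  using V_rr[of n n] rr_atm1[of n n] by (simp add: VV_def)

lemma Qp0_1: "poly (Qp n 0) 1 = 1"
  by (simp add: Qp_def VVnn_1)

lemma Qp0_m1: "poly (Qp n 0) (-1) = (-1) ^ n"
proof -
  have "poly (Qp n 0) (-1) = (-2) ^ n * fact n / (2 ^ n * fact n)" by (simp add: Qp_def VVnn_m1)
  also have "\<dots> = (-1) ^ n" by (simp add: power_minus' field_simps)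
  finally show ?thesis .
qed

lemma Qp1_1: "poly (Qp n 1) 1 = - (real n * (real n + 1) / 2)"
proof -
  have "nat (int n + 1) = Suc n" by simp
  then have "poly (Qp n 1) 1 = - (poly (VV n (Suc n)) 1 / (2 ^ n * fact n))" by (simp add: Qp_def)
  also have "\<dots> = - (real n * (real n + 1) / 2)" by (simp add: VV_deriv_at1 VVnn_1)
  finally show ?thesis .
qed

lemma Qpm1_m1: "1 \<le> n \<Longrightarrow> poly (Qp n (-1)) (-1) = (-1) ^ (n - 1) / 2"
proof -
  assume n: "1 \<le> n"
  have "nat (int n + - 1) = n - 1" using n by simp
  then have "poly (Qp n (-1)) (-1) = poly (rr n (n - 1)) (-1) / (2 ^ n * fact n)" by (simp add: Qp_def)
  also have "\<dots> = (-2) ^ (n - 1) * fact n / fact (n - (n - 1)) / (2 ^ n * fact n)"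
    using n by (simp add: rr_atm1)
  also have "\<dots> = (-1) ^ (n - 1) / 2"
  proof -
    have nn: "n - (n - 1) = 1" using n by simp
    have "(2::real) ^ n = 2 * 2 ^ (n - 1)" using n by (metis power_Suc Suc_diff_1 One_nat_def le_eq_less_or_eq less_le_trans zero_less_one le_add_diff_inverse)
    then show ?thesis unfolding nn by (simp add: power_minus' field_simps)
  qed
  finally show ?thesis .
qed

lemma sqrt_combine: "a * b = c\<^sup>2 * d \<Longrightarrow> 0 \<le> c \<Longrightarrow> sqrt a * sqrt b = c * sqrt d"
  by (metis real_sqrt_mult real_sqrt_abs abs_of_nonneg)

lemma KN0:
  assumes l: "2 \<le> l"
  shows "Kc l 0 * Nlm (l - 1) 0 = 2 * real l * Nlm l 0"
proof -
  define A where "A = (2 * real l + 1) / (2 * real l - 1) * ((real l)\<^sup>2 - 0)"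
  define B where "B = (2 * real (l - 1) + 1) / (4 * pi) * fact (nat (int (l - 1) - 0)) / fact (nat (int (l - 1) + 0))"
  define d where "d = (2 * real l + 1) / (4 * pi) * fact (nat (int l - 0)) / fact (nat (int l + 0))"
  have "Kc l 0 * Nlm (l - 1) 0 = 2 * (sqrt A * sqrt B)" by (simp add: Kc_def Nlm_def A_def B_def)
  also have "sqrt A * sqrt B = real l * sqrt d"
  proof (rule sqrt_combine)
    have l1: "real (l - 1) = real l - 1" using l by simp
    have ne: "2 * real l - 1 \<noteq> 0" using l by simp
    show "A * B = (real l)\<^sup>2 * d" unfolding A_def B_def d_def l1 using ne by (simp add: field_simps)
  qed simp
  finally show ?thesis by (simp add: Nlm_def d_def)
qed

lemma KN1:
  assumes l: "2 \<le> l"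
  shows "Kc l 1 * Nlm (l - 1) 1 = 2 * (real l + 1) * Nlm l 1"
proof -
  obtain n where n: "l = Suc (Suc n)" using l by (metis add_2_eq_Suc le_Suc_ex)
  define A where "A = (2 * real l + 1) / (2 * real l - 1) * ((real l)\<^sup>2 - 1)"
  define B where "B = (2 * real (l - 1) + 1) / (4 * pi) * fact (nat (int (l - 1) - 1)) / fact (nat (int (l - 1) + 1))"
  define d where "d = (2 * real l + 1) / (4 * pi) * fact (nat (int l - 1)) / fact (nat (int l + 1))"
  have "Kc l 1 * Nlm (l - 1) 1 = 2 * (sqrt A * sqrt B)" by (simp add: Kc_def Nlm_def A_def B_def)
  also have "sqrt A * sqrt B = (real l + 1) * sqrt d"
  proof (rule sqrt_combine)
    have e1: "nat (int (l - 1) - 1) = n" "nat (int (l - 1) + 1) = Suc (Suc n)"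
      "nat (int l - 1) = Suc n" "nat (int l + 1) = Suc (Suc (Suc n))" using n by auto
    have nz: "real n + 1 \<noteq> 0" "real n + 2 \<noteq> 0" "2 * real n + 3 \<noteq> 0" "real n + 3 \<noteq> 0" "pi \<noteq> 0" by auto
    show "A * B = (real l + 1)\<^sup>2 * d" unfolding A_def B_def d_def e1 unfolding n
      using nz by (simp add: divide_simps) (simp add: algebra_simps power2_eq_square)
  qed simp
  finally show ?thesis by (simp add: Nlm_def d_def)
qed

lemma KNm1:
  assumes l: "2 \<le> l"
  shows "Kc l (-1) * Nlm (l - 1) (-1) = 2 * (real l - 1) * Nlm l (-1)"
proof -
  obtain n where n: "l = Suc (Suc n)" using l by (metis add_2_eq_Suc le_Suc_ex)
  define A where "A = (2 * real l + 1) / (2 * real l - 1) * ((real l)\<^sup>2 - 1)"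
  define B where "B = (2 * real (l - 1) + 1) / (4 * pi) * fact (nat (int (l - 1) - (-1))) / fact (nat (int (l - 1) + (-1)))"
  define d where "d = (2 * real l + 1) / (4 * pi) * fact (nat (int l - (-1))) / fact (nat (int l + (-1)))"
  have "Kc l (-1) * Nlm (l - 1) (-1) = 2 * (sqrt A * sqrt B)" by (simp add: Kc_def Nlm_def A_def B_def)
  also have "sqrt A * sqrt B = (real l - 1) * sqrt d"
  proof (rule sqrt_combine)
    have e1: "nat (int (l - 1) - (-1)) = Suc (Suc n)" "nat (int (l - 1) + (-1)) = n"
      "nat (int l - (-1)) = Suc (Suc (Suc n))" "nat (int l + (-1)) = Suc n" using n by auto
    have nz: "real n + 1 \<noteq> 0" "real n + 2 \<noteq> 0" "2 * real n + 3 \<noteq> 0" "real n + 3 \<noteq> 0" "pi \<noteq> 0" by auto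
    show "A * B = (real l - 1)\<^sup>2 * d" unfolding A_def B_def d_def e1 unfolding n
      using nz by (simp add: divide_simps) (simp add: algebra_simps power2_eq_square)
  qed (use l in simp)
  finally show ?thesis by (simp add: Nlm_def d_def)
qed

lemma Zp_poly: "poly (Zp l m) x = Nlm l m * (poly (ap l m) x * poly (Qp l m) x)
   + Kc l m * Nlm (l - 1) m * ((of_int m + x) * poly (Qp (l - 1) m) x)"
  by (simp add: Zp_def algebra_simps)

lemma Zp_roots:
  assumes l: "2 \<le> l" and m: "\<bar>m\<bar> \<le> 1"
  shows "poly (Zp l m) 1 = 0 \<and> poly (Zp l m) (-1) = 0"
proof -
  obtain n where n: "l = Suc (Suc n)" using l by (metis add_2_eq_Suc le_Suc_ex)
  have l1: "real (l - 1) = real l - 1" using l by simp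
  have m3: "m = 0 \<or> m = 1 \<or> m = -1" using m by auto
  moreover have ?thesis if m0: "m = 0"
  proof -
    have KN: "Kc l 0 * Nlm (l - 1) 0 = 2 * real l * Nlm l 0" by (rule KN0[OF l])
    have a1: "poly (ap l 0) 1 = - 2 * real l" "poly (ap l 0) (-1) = - 2 * real l"
      by (simp_all add: ap_def algebra_simps)
    have q: "poly (Qp l 0) (-1) = - ((-1) ^ (l - 1))" "poly (Qp (l - 1) 0) (-1) = (-1) ^ (l - 1)"
      using Qp0_m1[of l] Qp0_m1[of "l - 1"] by (simp_all add: n)
    show ?thesis unfolding m0 Zp_poly KN a1 q Qp0_1 by (simp add: algebra_simps)
  qed
  moreover have ?thesis if m1: "m = 1"
  proof -
    have KN: "Kc l 1 * Nlm (l - 1) 1 = 2 * (real l + 1) * Nlm l 1" by (rule KN1[OF l])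
    have a1: "poly (ap l 1) 1 = 4 - 4 * real l" "poly (ap l 1) (-1) = 0"
      by (simp_all add: ap_def algebra_simps)
    have q: "poly (Qp (l - 1) 1) 1 = - ((real l - 1) * real l / 2)"
      using Qp1_1[of "l - 1"] l1 by simp
    have q1: "poly (Qp l 1) 1 = - (real l * (real l + 1) / 2)" by (rule Qp1_1)
    show ?thesis unfolding m1 Zp_poly KN a1 q q1 by (simp add: field_simps)
  qed
  moreover have ?thesis if m1: "m = -1"
  proof -
    have KN: "Kc l (-1) * Nlm (l - 1) (-1) = 2 * (real l - 1) * Nlm l (-1)" by (rule KNm1[OF l])
    have a1: "poly (ap l (-1)) 1 = 0" "poly (ap l (-1)) (-1) = 4 - 4 * real l"
      by (simp_all add: ap_def algebra_simps)
    have q: "poly (Qp l (-1)) (-1) = - ((-1) ^ n) / 2" "poly (Qp (l - 1) (-1)) (-1) = (-1) ^ n / 2"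
      using Qpm1_m1[of l] Qpm1_m1[of "l - 1"] by (simp_all add: n)
    show ?thesis unfolding m1 Zp_poly KN a1 q by (simp add: algebra_simps)
  qed
  ultimately show ?thesis by blast
qed

lemma poly_bnd: "\<exists>B. \<forall>x::real. \<bar>x\<bar> \<le> 1 \<longrightarrow> \<bar>poly p x\<bar> \<le> B"
proof -
  have "compact (poly p ` {-1..1::real})"
    by (rule compact_continuous_image) (auto intro: continuous_intros)
  then have "bounded (poly p ` {-1..1::real})" by (rule compact_imp_bounded)
  then obtain B where B: "\<forall>y\<in>poly p ` {-1..1::real}. \<bar>y\<bar> \<le> B" by (auto simp: bounded_real)
  show ?thesis
  proof (intro exI allI impI)
    fix x :: real assume "\<bar>x\<bar> \<le> 1"
    then have "x \<in> {-1..1}" by auto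
    then show "\<bar>poly p x\<bar> \<le> B" using B by blast
  qed
qed

lemma UU_factor:
  assumes "poly p 1 = 0" "poly p (-1) = 0"
  obtains q where "p = UU * q"
proof -
  obtain q1 where q1: "p = [:-1, 1:] * q1" using assms(1) by (metis poly_eq_0_iff_dvd dvdE)
  have "poly q1 (-1) = 0" using assms(2) q1 by simp
  then obtain q where q: "q1 = [:1, 1:] * q" by (metis poly_eq_0_iff_dvd dvdE minus_minus)
  have "p = UU * q" using q1 q by (simp add: algebra_simps)
  then show ?thesis using that by blast
qed

lemma radial_bound:
  assumes l: "2 \<le> l"
  shows "\<exists>B. \<forall>x::real. \<bar>x\<bar> < 1 \<longrightarrow> \<bar>(1 - x\<^sup>2) powr (of_int \<bar>m\<bar> / 2) * poly (Zp l m) x / (1 - x\<^sup>2)\<bar> \<le> B"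
proof (cases "\<bar>m\<bar> \<le> 1")
  case True
  obtain q where q: "Zp l m = UU * q" using Zp_roots[OF l True] UU_factor by blast
  obtain B where B: "\<And>x. \<bar>x\<bar> \<le> 1 \<Longrightarrow> \<bar>poly q x\<bar> \<le> B" using poly_bnd[of q] by blast
  show ?thesis
  proof (intro exI allI impI)
    fix x :: real assume x: "\<bar>x\<bar> < 1"
    have P: "0 < 1 - x\<^sup>2" using x by (simp add: abs_square_less_1)
    have P1: "1 - x\<^sup>2 \<le> 1" by simp
    have "(1 - x\<^sup>2) powr (of_int \<bar>m\<bar> / 2) * poly (Zp l m) x / (1 - x\<^sup>2)
        = - ((1 - x\<^sup>2) powr (of_int \<bar>m\<bar> / 2) * poly q x)"
      using P by (simp add: q field_simps power2_eq_square)
    also have "\<bar>\<dots>\<bar> \<le> 1 * B"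
      unfolding abs_minus_cancel abs_mult
      by (intro mult_mono) (use P P1 B x in \<open>auto intro: powr_le1\<close>)
    finally show "\<bar>(1 - x\<^sup>2) powr (of_int \<bar>m\<bar> / 2) * poly (Zp l m) x / (1 - x\<^sup>2)\<bar> \<le> B" by simp
  qed
next
  case False
  obtain B where B: "\<And>x. \<bar>x\<bar> \<le> 1 \<Longrightarrow> \<bar>poly (Zp l m) x\<bar> \<le> B" using poly_bnd[of "Zp l m"] by blast
  show ?thesis
  proof (intro exI allI impI)
    fix x :: real assume x: "\<bar>x\<bar> < 1"
    have P: "0 < 1 - x\<^sup>2" using x by (simp add: abs_square_less_1)
    have P1: "1 - x\<^sup>2 \<le> 1" by simp
    have "2 \<le> \<bar>m\<bar>" using False by simp
    then have "(2::real) \<le> of_int \<bar>m\<bar>" by (metis of_int_le_iff of_int_numeral)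
    then have e: "(0::real) \<le> of_int \<bar>m\<bar> / 2 - 1" by simp
    have "(1 - x\<^sup>2) powr (of_int \<bar>m\<bar> / 2) * poly (Zp l m) x / (1 - x\<^sup>2)
        = (1 - x\<^sup>2) powr (of_int \<bar>m\<bar> / 2 - 1) * poly (Zp l m) x"
      using P by (simp add: powr_diff)
    also have "\<bar>\<dots>\<bar> \<le> 1 * B"
      unfolding abs_mult
      by (intro mult_mono) (use P P1 B x e in \<open>auto intro: powr_le1\<close>)
    finally show "\<bar>(1 - x\<^sup>2) powr (of_int \<bar>m\<bar> / 2) * poly (Zp l m) x / (1 - x\<^sup>2)\<bar> \<le> B" by simp
  qed
qed

lemma y2lm_radial: "y2lm l m t p = complex_of_real (sqrt (fact (l - 2) / fact (l + 2)) *
   (alpha_s2 l m t * (Nlm l m * alegendre l m (cos t)) + beta_s2 l m t * (Nlm (l - 1) m * alegendre (l - 1) m (cos t))))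
   * cis (of_int m * p)"
  by (simp add: y2lm_def ylm_Nlm algebra_simps)

lemma y2lm_bounded:
  assumes l: "2 \<le> l" and ml: "\<bar>m\<bar> \<le> int l"
  shows "\<exists>B. \<forall>t p. cmod (y2lm l m t p) \<le> B"
proof -
  obtain B where B: "\<And>x::real. \<bar>x\<bar> < 1 \<Longrightarrow> \<bar>(1 - x\<^sup>2) powr (of_int \<bar>m\<bar> / 2) * poly (Zp l m) x / (1 - x\<^sup>2)\<bar> \<le> B"
    using radial_bound[OF l, of m] by blast
  define c where "c = sqrt (fact (l - 2) / fact (l + 2) :: real)"
  have "cmod (y2lm l m t p) \<le> \<bar>c\<bar> * \<bar>B\<bar>" for t p
  proof (cases "sin t = 0")
    case True
    then have "alpha_s2 l m t = 0" "beta_s2 l m t = 0" by (simp_all add: alpha_s2_def beta_s2_def cot_def)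
    then show ?thesis by (simp add: y2lm_radial)
  next
    case False
    have "cmod (y2lm l m t p) = \<bar>c * (alpha_s2 l m t * (Nlm l m * alegendre l m (cos t)) + beta_s2 l m t * (Nlm (l - 1) m * alegendre (l - 1) m (cos t)))\<bar>"
      by (simp only: y2lm_radial norm_mult norm_of_real norm_cis c_def mult_1_right)
    also have "\<dots> = \<bar>c\<bar> * \<bar>(1 - (cos t)\<^sup>2) powr (of_int \<bar>m\<bar> / 2) * poly (Zp l m) (cos t) / (1 - (cos t)\<^sup>2)\<bar>"
      unfolding radial_identity[OF l ml False] abs_mult ..
    also have "\<dots> \<le> \<bar>c\<bar> * \<bar>B\<bar>"
      by (intro mult_left_mono order.trans[OF B[OF cos_lt1[OF False]]]) auto
    finally show ?thesis .
  qed
  then show ?thesis by blast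
qed

lemma ylm_bounded:
  assumes "0 \<le> m"
  shows "\<exists>B. \<forall>t p. cmod (ylm l m t p) \<le> B"
proof -
  define pp :: "real poly" where "pp = (pderiv ^^ nat (int l + m)) ([:-1, 0, 1:] ^ l)"
  obtain B where B: "\<And>x::real. \<bar>x\<bar> \<le> 1 \<Longrightarrow> \<bar>poly pp x\<bar> \<le> B" using poly_bnd[of pp] by blast
  define C where "C = \<bar>Nlm l m\<bar> * (1 / (2 ^ l * fact l)) * \<bar>B\<bar>"
  have "cmod (ylm l m t p) \<le> C" for t p
  proof -
    define x where "x = cos t"
    have x1: "\<bar>x\<bar> \<le> 1" by (simp add: x_def)
    have P0: "0 \<le> 1 - x\<^sup>2" "1 - x\<^sup>2 \<le> 1" using x1 by (simp_all add: abs_square_le_1)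
    have pw: "\<bar>(1 - x\<^sup>2) powr (of_int m / 2)\<bar> \<le> 1"
      using P0 assms by (simp add: powr_le1)
    have "cmod (ylm l m t p) = \<bar>Nlm l m\<bar> * \<bar>alegendre l m x\<bar>"
      by (simp only: ylm_Nlm norm_mult norm_of_real norm_cis mult_1_right abs_mult x_def)
    also have "\<bar>alegendre l m x\<bar> = (1 / (2 ^ l * fact l)) * \<bar>(1 - x\<^sup>2) powr (of_int m / 2)\<bar> * \<bar>poly pp x\<bar>"
      by (simp add: alegendre_def pp_def abs_mult)
    also have "\<dots> \<le> (1 / (2 ^ l * fact l)) * 1 * \<bar>B\<bar>"
      using B[OF x1] pw by (intro mult_mono mult_left_mono) auto
    finally show ?thesis unfolding C_def by (simp add: mult_left_mono mult.assoc)
  qed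
  then show ?thesis by blast
qed

lemma yreal_bounded: "\<exists>B. \<forall>t p. \<bar>yreal l m t p\<bar> \<le> B"
proof -
  obtain B2 where B2: "\<And>t p. cmod (ylm l \<bar>m\<bar> t p) \<le> B2" using ylm_bounded[of "\<bar>m\<bar>" l] by auto
  obtain B0 where B0: "\<And>t p. cmod (ylm l 0 t p) \<le> B0" using ylm_bounded[of 0 l] by auto
  have "\<bar>yreal l m t p\<bar> \<le> sqrt 2 * B2 + B0" for t p
  proof -
    have B2': "cmod (ylm l m t p) \<le> B2" if "m > 0" using B2[of t p] that by simp
    have "0 \<le> B2" using B2[of t p] norm_ge_zero[of "ylm l \<bar>m\<bar> t p"] by linarith
    then have s: "0 \<le> sqrt 2 * B2" by simp
    have s0: "0 \<le> B0" using B0[of t p] norm_ge_zero[of "ylm l 0 t p"] by linarith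
    consider "m > 0" | "m = 0" | "m < 0" by linarith
    then show ?thesis
    proof cases
      case 1
      then have "\<bar>yreal l m t p\<bar> = sqrt 2 * \<bar>Re (ylm l m t p)\<bar>" by (simp add: yreal_def abs_mult)
      also have "\<dots> \<le> sqrt 2 * B2" using abs_Re_le_cmod[of "ylm l m t p"] B2'[OF 1] by (intro mult_left_mono) auto
      finally show ?thesis using s0 by simp
    next
      case 2
      then have "\<bar>yreal l m t p\<bar> = \<bar>Re (ylm l 0 t p)\<bar>" by (simp add: yreal_def)
      also have "\<dots> \<le> B0" using abs_Re_le_cmod[of "ylm l 0 t p"] B0[of t p] by linarith
      finally show ?thesis using s by simp
    next
      case 3
      then have "\<bar>yreal l m t p\<bar> = sqrt 2 * \<bar>Im (ylm l \<bar>m\<bar> t p)\<bar>" by (simp add: yreal_def abs_mult)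
      also have "\<dots> \<le> sqrt 2 * B2" using abs_Im_le_cmod[of "ylm l \<bar>m\<bar> t p"] B2[of t p] by (intro mult_left_mono) auto
      finally show ?thesis using s0 by simp
    qed
  qed
  then show ?thesis by blast
qed

lemma psh_good:
  assumes "psh_index l m q"
  shows "good (psh l m q)"
proof -
  have bnd: "\<exists>B. \<forall>a b j. \<bar>psh l m q a b $ j\<bar> \<le> B"
  proof (cases "q = 1 \<or> q = 2")
    case True
    then have l: "2 \<le> l" and ml: "\<bar>m\<bar> \<le> int l" using assms by (auto simp: psh_index_def)
    obtain B where B: "\<And>t p. cmod (y2lm l m t p) \<le> B" using y2lm_bounded[OF l ml] by blast
    have "\<bar>psh l m q a b $ j\<bar> \<le> B + B" for a b j
    proof -
      have "\<bar>psh l m q a b $ j\<bar> \<le> \<bar>Re (y2lm l m a b)\<bar> + \<bar>Im (y2lm l m a b)\<bar>"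
      proof (cases "q = 1")
        case True
        then show ?thesis using stokes_comp[of 0 "Re (y2lm l m a b)" "Im (y2lm l m a b)" 0 j] by (simp add: psh_def)
      next
        case False
        then have "q = 2" using \<open>q = 1 \<or> q = 2\<close> by simp
        then show ?thesis using stokes_comp[of 0 "- Im (y2lm l m a b)" "Re (y2lm l m a b)" 0 j] by (simp add: psh_def)
      qed
      also have "\<dots> \<le> B + B"
        using abs_Re_le_cmod[of "y2lm l m a b"] abs_Im_le_cmod[of "y2lm l m a b"] B[of a b] by linarith
      finally show ?thesis .
    qed
    then show ?thesis by blast
  next
    case False
    obtain B where B: "\<And>t p. \<bar>yreal l m t p\<bar> \<le> B" using yreal_bounded by blast
    have "\<bar>psh l m q a b $ j\<bar> \<le> B" for a b j
    proof -
      have "\<bar>psh l m q a b $ j\<bar> \<le> \<bar>yreal l m a b\<bar>"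
        using False stokes_comp[of "yreal l m a b" 0 0 0 j] stokes_comp[of 0 0 0 "yreal l m a b" j]
        by (auto simp: psh_def)
      then show ?thesis using B[of a b] by linarith
    qed
    then show ?thesis by blast
  qed
  then show ?thesis unfolding good_def using psh_meas by blast
qed

definition sv :: "nat \<Rightarrow> real \<Rightarrow> real^4" where
  "sv q y = (if q = 0 then stokes y 0 0 0 else stokes 0 0 0 y)"

lemma psh_sv: "q \<noteq> 1 \<Longrightarrow> q \<noteq> 2 \<Longrightarrow> psh l m q t p = sv q (yreal l m t p)"
  by (simp add: psh_def sv_def)

lemma sv_lin: "sv q (c * y1 + s * y2) = c *\<^sub>R sv q y1 + s *\<^sub>R sv q y2"
  by (simp add: sv_def stokes_def vec_eq_iff)

lemma good_zero: "good (\<lambda>a b. 0)"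
  unfolding good_def by (auto intro: exI[of _ 0])

lemma good_neg: "good u \<Longrightarrow> good (\<lambda>a b. - u a b)"
proof -
  assume u: "good u"
  have "good (\<lambda>a b. (-1) *\<^sub>R u a b + 0 *\<^sub>R u a b)" by (rule good_lin[OF u u])
  then show ?thesis by simp
qed

lemma psh_rotpair:
  assumes idx: "psh_index l m q"
  shows "\<exists>e' n. rotpair (psh l m q) e' n \<and> \<bar>n\<bar> = \<bar>m\<bar>"
proof -
  have q3: "q \<le> 3" and ml: "\<bar>m\<bar> \<le> int l" using idx by (auto simp: psh_index_def)
  consider "q = 1" | "q = 2" | "q \<noteq> 1" "q \<noteq> 2" by blast
  then show ?thesis
  proof cases
    case 1
    then have l: "2 \<le> l" using idx by (auto simp: psh_index_def)
    have g1: "good (psh l m 1)" and g2: "good (psh l m 2)"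
      using l ml by (auto intro!: psh_good simp: psh_index_def)
    have "rotpair (psh l m 1) (psh l m 2) m"
      unfolding rotpair_def using g1 g2 psh_per psh1_rot psh2_rot by blast
    then show ?thesis using 1 by blast
  next
    case 2
    then have l: "2 \<le> l" using idx by (auto simp: psh_index_def)
    have g1: "good (psh l m 1)" and g2: "good (psh l m 2)"
      using l ml by (auto intro!: psh_good simp: psh_index_def)
    have r1: "psh l m 2 a (b + g) = cos (of_int m * g) *\<^sub>R psh l m 2 a b + sin (of_int m * g) *\<^sub>R (- psh l m 1 a b)" for a b g
      by (subst psh2_rot) (simp add: algebra_simps)
    have r2: "- psh l m 1 a (b + g) = (- sin (of_int m * g)) *\<^sub>R psh l m 2 a b + cos (of_int m * g) *\<^sub>R (- psh l m 1 a b)" for a b g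
      by (subst psh1_rot) (simp add: algebra_simps)
    have p1: "- psh l m 1 a (b + 2 * pi) = - psh l m 1 a b" for a b by (simp only: psh_per)
    have "rotpair (psh l m 2) (\<lambda>a b. - psh l m 1 a b) m"
      unfolding rotpair_def using g2 good_neg[OF g1] psh_per r1 r2 p1 by blast
    then show ?thesis using 2 by blast
  next
    case 3
    have ge: "good (psh l m q)" using idx by (rule psh_good)
    show ?thesis
    proof (cases "m = 0")
      case True
      have "rotpair (psh l m q) (\<lambda>a b. 0) 0"
        unfolding rotpair_def using ge good_zero True 3
        by (simp add: psh_per psh_sv yreal_zero_rot)
      then show ?thesis using True by blast
    next
      case False
      have ge': "good (psh l (-m) q)" using idx by (intro psh_good) (auto simp: psh_index_def)
      have rot0: "yreal l m t (p + g) = cos (of_int (-m) * g) * yreal l m t p + sin (of_int (-m) * g) * yreal l (-m) t p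
         \<and> yreal l (-m) t (p + g) = (- sin (of_int (-m) * g)) * yreal l m t p + cos (of_int (-m) * g) * yreal l (-m) t p"
        for t p g
      proof (cases "m > 0")
        case True then show ?thesis by (simp only: yreal_pos_rot[OF True] simp_thms)
      next
        case False then have "m < 0" using \<open>m \<noteq> 0\<close> by simp
        then show ?thesis by (simp only: yreal_neg_rot[OF \<open>m < 0\<close>] simp_thms)
      qed
      note rot = conjunct1[OF rot0] conjunct2[OF rot0]
      have "rotpair (psh l m q) (psh l (-m) q) (-m)"
        unfolding rotpair_def using ge ge' 3
        by (simp only: psh_per psh_sv rot sv_lin simp_thms all_simps)
      then show ?thesis by fastforce
    qed
  qed
qed

lemma part1:
  assumes P: "integrable_field P" and iso: "isotropic P"
    and io: "psh_index lo mo po" and ii: "psh_index li mi pin" and ne: "\<bar>mi\<bar> \<noteq> \<bar>mo\<bar>"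
  shows "psh_coeff P lo mo po li mi pin = 0"
proof -
  have "psh_coeff P lo mo po li mi pin = JJ P (psh lo mo po) (psh li mi pin)"
    unfolding psh_coeff_def JJ_def by (rule coeff_joint[OF P psh_good[OF io] psh_good[OF ii]])
  also have "\<dots> = 0"
  proof -
    obtain eo' no where ro: "rotpair (psh lo mo po) eo' no" and no: "\<bar>no\<bar> = \<bar>mo\<bar>" using psh_rotpair[OF io] by blast
    obtain ei' ni where ri: "rotpair (psh li mi pin) ei' ni" and ni: "\<bar>ni\<bar> = \<bar>mi\<bar>" using psh_rotpair[OF ii] by blast
    show ?thesis by (rule pair_zero[OF P iso ro ri]) (use no ni ne in simp)
  qed
  finally show ?thesis .
qed

theorem mainTheorem4:
  fixes P :: mueller_field
  assumes "is_mueller_field P"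
    and "isotropic P"
    and "integrable_field P"
  shows "(\<forall>lo mo po li mi pin. psh_index lo mo po \<and> psh_index li mi pin \<and> \<bar>mi\<bar> \<noteq> \<bar>mo\<bar>
            \<longrightarrow> psh_coeff P lo mo po li mi pin = 0)
       \<and> (\<forall>lo mo li mi. 2 \<le> li \<and> 2 \<le> lo \<and> \<bar>mo\<bar> \<le> int lo \<and> \<bar>mi\<bar> \<le> int li \<and> mi \<noteq> mo
            \<longrightarrow> tilde_iso P lo mo li mi = 0)
       \<and> (\<forall>lo mo li mi. 2 \<le> li \<and> 2 \<le> lo \<and> \<bar>mo\<bar> \<le> int lo \<and> \<bar>mi\<bar> \<le> int li \<and> mi \<noteq> - mo
            \<longrightarrow> tilde_conj P lo mo li mi = 0)"
  using part1[OF assms(3) assms(2)] tilde_iso_zero[OF assms(2)] tilde_conj_zero[OF assms(2)]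
  by blast

end
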